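(* (i) For integers $k\ge1$, $m\ge0$, the Jones polynomial of the Montesinos link $M_{[k[\frac25],m[\frac12]]}$ (with any orientation) satisfies $$V_{M_{[k[\frac25],m[\frac12]]}}(t)\ \doteq\ (1+t^2)(1-t^2)^{k-1}(1-t)^m .$$ (ii) If additionally $k+m\ge2$, then $V_{M_{[k[\frac25],m[\frac12]]}}(t)\doteq(1+t)^{k-1}(1-t)^{k+m-2}$.
   Context: Conway notation for 2-tangles: $[\frac pq]$ is the rational tangle with fraction $p/q$; the numerator $T^N$ joins NW–NE and SW–SE outside the ball; $T_A*T_B$ places $T_A$ left of $T_B$ joining NE of $T_A$ to NW of $T_B$ and SE to SW. $M_{[k[\frac25],m[\frac12]]}=([\frac25]*\cdots*[\frac25]*[\frac12]*\cdots*[\frac12])^N$ with $k$ factors $[\frac25]$ and $m$ factors $[\frac12]$. Let $I_t$ be the ideal of $\mathbb Z[t^{\pm1/2}]$ generated by $\frac{t^5+1}{t+1}=t^4-t^3+t^2-t+1$. For $f,g\in\mathbb Z[t^{\pm1/2}]$ write $f\doteq g$ if $f\equiv \pm t^{i/2}g \pmod{I_t}$ for some sign and some integer $i$. *)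

theory Defs
  imports "HOL-Computational_Algebra.Formal_Laurent_Series"
begin

text \<open>Elements of Z[t^(+-1/2)] are represented as integer formal Laurent series
  with finite support in the variable fls_X, which stands for t^(1/2).\<close>

definition laurent_poly :: "int fls \<Rightarrow> bool" where
  "laurent_poly f \<longleftrightarrow> finite {i. fls_nth f i \<noteq> 0}"

definition tvar :: "int fls" where
  "tvar = fls_X ^ 2"

definition phi10 :: "int fls" where
  "phi10 = tvar ^ 4 - tvar ^ 3 + tvar ^ 2 - tvar + 1"  \<comment> \<open>(t^5+1)/(t+1)\<close>

definition in_It :: "int fls \<Rightarrow> bool" where
  "in_It f \<longleftrightarrow> (\<exists>h. laurent_poly h \<and> f = h * phi10)"

definition doteq :: "int fls \<Rightarrow> int fls \<Rightarrow> bool" where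
  "doteq f g \<longleftrightarrow> (\<exists>\<epsilon>\<in>{1, -1}. \<exists>i::int. in_It (f - \<epsilon> * fls_X_intpow i * g))"

text \<open>Every crossing is a translate of the elementary tangle [1]: its four ends are
  the corners NW, NE, SW, SE; the strands are NW--SE (over strand) and NE--SW
  (under strand).\<close>

datatype corner = NW | NE | SW | SE

type_synonym slot = "nat \<times> corner"

record tdiag =
  ncr   :: nat
  arcs  :: "(slot \<times> slot) set"
  bnw   :: slot
  bne   :: slot
  bsw   :: slot
  bse   :: slot

text \<open>Algebraic tangle expressions built from [1] by the tangle sum T*S
  (T left of S, NE of T joined to NW of S, SE of T to SW of S) and the vertical
  sum (T above S, SW of T joined to NW of S, SE of T to NE of S).\<close>
datatype ctangle = One | TSum ctangle ctangle | VSum ctangle ctangle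

definition shift_slot :: "nat \<Rightarrow> slot \<Rightarrow> slot" where
  "shift_slot k s = (fst s + k, snd s)"

fun tdiag_of :: "ctangle \<Rightarrow> tdiag" where
  "tdiag_of One = \<lparr>ncr = 1, arcs = {}, bnw = (0, NW), bne = (0, NE), bsw = (0, SW), bse = (0, SE)\<rparr>"
| "tdiag_of (TSum T S) =
     (let A = tdiag_of T; B = tdiag_of S; k = ncr A; f = shift_slot k in
      \<lparr>ncr = k + ncr B,
       arcs = arcs A \<union> map_prod f f ` arcs B \<union> {(bne A, f (bnw B)), (bse A, f (bsw B))},
       bnw = bnw A, bne = f (bne B), bsw = bsw A, bse = f (bse B)\<rparr>)"
| "tdiag_of (VSum T S) =
     (let A = tdiag_of T; B = tdiag_of S; k = ncr A; f = shift_slot k in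
      \<lparr>ncr = k + ncr B,
       arcs = arcs A \<union> map_prod f f ` arcs B \<union> {(bsw A, f (bnw B)), (bse A, f (bne B))},
       bnw = bnw A, bne = bne A, bsw = f (bsw B), bse = f (bse B)\<rparr>)"

text \<open>Integer tangle [n] = [1]*...*[1] (fraction n) and [1/n] = vertical stack of
  n copies of [1] (fraction 1/n).  Since 1/F is additive under vertical sum,
  [2/5] = [1/2] stacked above [2]  (5/2 = 2 + 1/2).\<close>
definition rat_1_2 :: ctangle where "rat_1_2 = VSum One One"
definition rat_2_5 :: ctangle where "rat_2_5 = VSum (VSum One One) (TSum One One)"

fun tsum_list :: "ctangle list \<Rightarrow> ctangle" where
  "tsum_list [] = One"   \<comment> \<open>never used for nonempty lists\<close>
| "tsum_list [T] = T"
| "tsum_list (T # Ts) = TSum T (tsum_list Ts)"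

type_synonym ldiag = "nat \<times> (slot \<times> slot) set"

definition numerator :: "ctangle \<Rightarrow> ldiag" where
  "numerator T = (let D = tdiag_of T in
     (ncr D, arcs D \<union> {(bnw D, bne D), (bsw D, bse D)}))"

definition montesinos_2_5_1_2 :: "nat \<Rightarrow> nat \<Rightarrow> ldiag" where
  "montesinos_2_5_1_2 k m = numerator (tsum_list (replicate k rat_2_5 @ replicate m rat_1_2))"

text \<open>An orientation: ori s = True iff the strand enters the crossing at end s.\<close>
definition is_orientation :: "ldiag \<Rightarrow> (slot \<Rightarrow> bool) \<Rightarrow> bool" where
  "is_orientation D ori \<longleftrightarrow>
     (\<forall>i<fst D. ori (i, NW) \<noteq> ori (i, SE) \<and> ori (i, NE) \<noteq> ori (i, SW)) \<and>
     (\<forall>(x, y)\<in>snd D. ori x \<noteq> ori y)"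

definition writhe :: "ldiag \<Rightarrow> (slot \<Rightarrow> bool) \<Rightarrow> int" where
  "writhe D ori = (\<Sum>i<fst D. if ori (i, NW) \<noteq> ori (i, NE) then 1 else -1)"

text \<open>A-smoothing (crossings in S) joins NW-NE and SW-SE; B-smoothing joins NW-SW and NE-SE.\<close>
definition smoothing :: "nat set \<Rightarrow> nat \<Rightarrow> (slot \<times> slot) set" where
  "smoothing S i = (if i \<in> S then {((i, NW), (i, NE)), ((i, SW), (i, SE))}
                    else {((i, NW), (i, SW)), ((i, NE), (i, SE))})"

definition num_loops :: "ldiag \<Rightarrow> nat set \<Rightarrow> nat" where
  "num_loops D S = (let R = snd D \<union> (\<Union>i<fst D. smoothing S i) in
     card (({..<fst D} \<times> UNIV) // ((R \<union> R\<inverse>)\<^sup>*)))"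

text \<open>V(t) = (-A^3)^(-w) <D> with A = t^(-1/4); writing s = t^(1/2) = fls_X,
  the state S contributes (-1)^w s^((3w+n)/2 - |S|) (-(s + s^-1))^(loops-1).\<close>
definition jones :: "ldiag \<Rightarrow> (slot \<Rightarrow> bool) \<Rightarrow> int fls" where
  "jones D ori = (let n = fst D; w = writhe D ori in
     (if even w then 1 else -1) *
     (\<Sum>S\<in>Pow {..<n}. fls_X_intpow ((3 * w + int n) div 2 - int (card S)) *
        (- (fls_X + fls_X_inv)) ^ (num_loops D S - 1)))"

end

theory Submission
  imports Defs
begin


definition cn :: "('a \<times> 'a) set \<Rightarrow> ('a \<times> 'a) set" where
  "cn E = (E \<union> E\<inverse>)\<^sup>*"

definition ncomp :: "'a set \<Rightarrow> ('a \<times> 'a) set \<Rightarrow> nat" where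
  "ncomp V E = card ((\<lambda>x. cn E `` {x}) ` V)"

lemma cn_refl[simp]: "(x, x) \<in> cn E"
  by (simp add: cn_def)

lemma cn_sym: "(x, y) \<in> cn E \<Longrightarrow> (y, x) \<in> cn E"
proof -
  assume "(x, y) \<in> cn E"
  then have "(y, x) \<in> ((E \<union> E\<inverse>)\<inverse>)\<^sup>*" unfolding cn_def by (rule rtrancl_converseI)
  also have "(E \<union> E\<inverse>)\<inverse> = E \<union> E\<inverse>" by auto
  finally show ?thesis unfolding cn_def .
qed

lemma cn_trans: "(x, y) \<in> cn E \<Longrightarrow> (y, z) \<in> cn E \<Longrightarrow> (x, z) \<in> cn E"
  unfolding cn_def by (rule rtrancl_trans)

lemma cn_edge: "(x, y) \<in> E \<Longrightarrow> (x, y) \<in> cn E"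
  unfolding cn_def by auto

lemma cn_edge': "(x, y) \<in> E \<Longrightarrow> (y, x) \<in> cn E"
  unfolding cn_def by auto

lemma cn_mono: "E \<subseteq> F \<Longrightarrow> (x, y) \<in> cn E \<Longrightarrow> (x, y) \<in> cn F"
proof -
  assume "E \<subseteq> F" "(x, y) \<in> cn E"
  moreover have "E \<union> E\<inverse> \<subseteq> F \<union> F\<inverse>" using \<open>E \<subseteq> F\<close> by auto
  ultimately show ?thesis unfolding cn_def using rtrancl_mono by blast
qed

lemma cn_class_eq: "cn E `` {x} = cn E `` {y} \<longleftrightarrow> (x, y) \<in> cn E"
proof
  assume "cn E `` {x} = cn E `` {y}"
  then have "y \<in> cn E `` {x}" by auto
  then show "(x, y) \<in> cn E" by auto
next
  assume "(x, y) \<in> cn E"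
  then have yx: "(y, x) \<in> cn E" by (rule cn_sym)
  show "cn E `` {x} = cn E `` {y}"
  proof (rule set_eqI)
    fix z show "z \<in> cn E `` {x} \<longleftrightarrow> z \<in> cn E `` {y}"
      using cn_trans[OF \<open>(x, y) \<in> cn E\<close>, of z] cn_trans[OF yx, of z] by auto
  qed
qed

lemma cn_insert:
  "(x, y) \<in> cn (insert (a, b) E) \<longleftrightarrow>
     (x, y) \<in> cn E \<or> ((x, a) \<in> cn E \<and> (b, y) \<in> cn E) \<or> ((x, b) \<in> cn E \<and> (a, y) \<in> cn E)"
    (is "?L \<longleftrightarrow> ?R")
proof
  assume ?L
  then have "(x, y) \<in> (insert (a,b) E \<union> (insert (a,b) E)\<inverse>)\<^sup>*" by (simp add: cn_def)
  then show ?R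
  proof (induction rule: rtrancl_induct)
    case base
    then show ?case by simp
  next
    case (step y z)
    from step(2) have "(y, z) \<in> E \<union> E\<inverse> \<or> (y, z) = (a, b) \<or> (y, z) = (b, a)" by auto
    then show ?case
    proof (elim disjE)
      assume "(y, z) \<in> E \<union> E\<inverse>"
      then have yz: "(y, z) \<in> cn E" by (auto simp: cn_def)
      show ?case using step(3) cn_trans[OF _ yz] by blast
    next
      assume "(y, z) = (a, b)"
      then have "y = a" "z = b" by auto
      then show ?case using step(3) by auto
    next
      assume "(y, z) = (b, a)"
      then have "y = b" "z = a" by auto
      then show ?case using step(3) by auto
    qed
  qed
next
  assume R: ?R
  have ab: "(a, b) \<in> cn (insert (a, b) E)" by (rule cn_edge) simp
  have ba: "(b, a) \<in> cn (insert (a, b) E)" by (rule cn_sym[OF ab])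
  have m: "\<And>u v. (u, v) \<in> cn E \<Longrightarrow> (u, v) \<in> cn (insert (a, b) E)"
    by (rule cn_mono[rotated]) auto
  from R show ?L
  proof (elim disjE conjE)
    assume "(x, y) \<in> cn E" then show ?L by (rule m)
  next
    assume "(x, a) \<in> cn E" "(b, y) \<in> cn E"
    then show ?L using cn_trans[OF cn_trans[OF m ab] m] by blast
  next
    assume "(x, b) \<in> cn E" "(a, y) \<in> cn E"
    then show ?L using cn_trans[OF cn_trans[OF m ba] m] by blast
  qed
qed

lemma cn_in_V:
  assumes "E \<subseteq> V \<times> V" "(x, y) \<in> cn E"
  shows "x = y \<or> (x \<in> V \<and> y \<in> V)"
proof -
  from assms(2) have "(x, y) \<in> (E \<union> E\<inverse>)\<^sup>*" by (simp add: cn_def)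
  then show ?thesis
    by (induction rule: rtrancl_induct) (use assms(1) in auto)
qed

lemma cn_union_disj:
  assumes "E1 \<subseteq> V1 \<times> V1" "E2 \<subseteq> V2 \<times> V2" "V1 \<inter> V2 = {}"
  shows "(x, y) \<in> cn (E1 \<union> E2) \<longleftrightarrow> (x, y) \<in> cn E1 \<or> (x, y) \<in> cn E2"
proof
  assume "(x, y) \<in> cn (E1 \<union> E2)"
  then have "(x, y) \<in> ((E1 \<union> E2) \<union> (E1 \<union> E2)\<inverse>)\<^sup>*" by (simp add: cn_def)
  then show "(x, y) \<in> cn E1 \<or> (x, y) \<in> cn E2"
  proof (induction rule: rtrancl_induct)
    case base then show ?case by simp
  next
    case (step y z)
    show ?case
    proof (cases "(y, z) \<in> E1 \<union> E1\<inverse>")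
      case True
      then have yz: "(y, z) \<in> cn E1" by (auto simp: cn_def)
      from step(3) show ?thesis
      proof
        assume "(x, y) \<in> cn E1" then show ?thesis using cn_trans[OF _ yz] by blast
      next
        assume xy: "(x, y) \<in> cn E2"
        have "y \<in> V1" using True assms(1) by auto
        then have "x = y" using cn_in_V[OF assms(2) xy] assms(3) by auto
        then show ?thesis using yz by simp
      qed
    next
      case False
      then have F: "(y, z) \<in> E2 \<union> E2\<inverse>" using step(2) by auto
      then have yz: "(y, z) \<in> cn E2" by (auto simp: cn_def)
      from step(3) show ?thesis
      proof
        assume "(x, y) \<in> cn E2" then show ?thesis using cn_trans[OF _ yz] by blast
      next
        assume xy: "(x, y) \<in> cn E1"
        have "y \<in> V2" using F assms(2) by auto
        then have "x = y" using cn_in_V[OF assms(1) xy] assms(3) by auto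
        then show ?thesis using yz by simp
      qed
    qed
  qed
next
  assume "(x, y) \<in> cn E1 \<or> (x, y) \<in> cn E2"
  then show "(x, y) \<in> cn (E1 \<union> E2)"
    by (meson cn_mono sup_ge1 sup_ge2)
qed

lemma cn_map_imp:
  assumes "inj f" "(u, v) \<in> cn (map_prod f f ` E)"
  shows "u = v \<or> (\<exists>x y. u = f x \<and> v = f y \<and> (x, y) \<in> cn E)"
proof -
  from assms(2) have "(u, v) \<in> (map_prod f f ` E \<union> (map_prod f f ` E)\<inverse>)\<^sup>*" by (simp add: cn_def)
  then show ?thesis
  proof (induction rule: rtrancl_induct)
    case base then show ?case by simp
  next
    case (step v w)
    from step(2) obtain a b where ab: "(a, b) \<in> E \<union> E\<inverse>" "v = f a" "w = f b"
      by auto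
    have abc: "(a, b) \<in> cn E" using ab(1) by (auto simp: cn_def)
    from step(3) show ?case
    proof
      assume "u = v" then show ?thesis using ab abc by blast
    next
      assume "\<exists>x y. u = f x \<and> v = f y \<and> (x, y) \<in> cn E"
      then obtain x y where xy: "u = f x" "v = f y" "(x, y) \<in> cn E" by blast
      have "f y = f a" using ab(2) xy(2) by simp
      then have "y = a" using assms(1) by (simp add: inj_eq)
      have "(x, b) \<in> cn E" using cn_trans[OF xy(3)[unfolded \<open>y = a\<close>] abc] .
      then show ?thesis using xy(1) ab(3) by blast
    qed
  qed
qed

lemma cn_map_mono:
  assumes "(x, y) \<in> cn E"
  shows "(f x, f y) \<in> cn (map_prod f f ` E)"
proof -
  from assms have "(x, y) \<in> (E \<union> E\<inverse>)\<^sup>*" by (simp add: cn_def)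
  then show ?thesis
  proof (induction rule: rtrancl_induct)
    case base then show ?case by simp
  next
    case (step y z)
    from step(2) have "(f y, f z) \<in> map_prod f f ` E \<or> (f z, f y) \<in> map_prod f f ` E"
      by (auto intro: rev_image_eqI)
    then have "(f y, f z) \<in> cn (map_prod f f ` E)"
      by (metis cn_edge cn_edge')
    then show ?case using cn_trans[OF step(3)] by simp
  qed
qed

lemma cn_map_iff:
  assumes "inj f"
  shows "(f x, f y) \<in> cn (map_prod f f ` E) \<longleftrightarrow> (x, y) \<in> cn E"
proof
  assume "(f x, f y) \<in> cn (map_prod f f ` E)"
  from cn_map_imp[OF assms this] show "(x, y) \<in> cn E"
  proof
    assume "f x = f y" then have "x = y" using assms by (simp add: inj_eq)
    then show ?thesis by simp
  next
    assume "\<exists>x' y'. f x = f x' \<and> f y = f y' \<and> (x', y') \<in> cn E"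
    then obtain x' y' where "f x = f x'" "f y = f y'" "(x', y') \<in> cn E" by blast
    moreover have "x = x'" "y = y'" using calculation(1,2) assms by (simp_all add: inj_eq)
    ultimately show ?thesis by simp
  qed
next
  assume "(x, y) \<in> cn E"
  then show "(f x, f y) \<in> cn (map_prod f f ` E)" by (rule cn_map_mono)
qed

lemma card_image_eqrel:
  assumes "\<And>x y. x \<in> A \<Longrightarrow> y \<in> A \<Longrightarrow> h x = h y \<longleftrightarrow> g x = g y"
  shows "card (h ` A) = card (g ` A)"
proof -
  define \<phi> where "\<phi> c = h (inv_into A g c)" for c
  have phi: "\<phi> (g x) = h x" if "x \<in> A" for x
  proof -
    have "inv_into A g (g x) \<in> A" "g (inv_into A g (g x)) = g x"
      using that by (simp_all add: inv_into_into f_inv_into_f)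
    then show ?thesis unfolding \<phi>_def using assms[of "inv_into A g (g x)" x] that by simp
  qed
  have "h ` A = (\<lambda>x. \<phi> (g x)) ` A" using phi by simp
  also have "\<dots> = \<phi> ` (g ` A)" by (simp add: image_image)
  finally have 1: "h ` A = \<phi> ` (g ` A)" .
  have "inj_on \<phi> (g ` A)"
  proof (rule inj_onI)
    fix c d assume "c \<in> g ` A" "d \<in> g ` A" "\<phi> c = \<phi> d"
    then obtain x y where xy: "x \<in> A" "y \<in> A" "c = g x" "d = g y" by auto
    with \<open>\<phi> c = \<phi> d\<close> have "h x = h y" using phi by simp
    then show "c = d" using assms[OF xy(1,2)] xy by simp
  qed
  then show ?thesis using 1 by (simp add: card_image)
qed


lemma ncomp_cong:
  assumes "\<And>x y. x \<in> V \<Longrightarrow> y \<in> V \<Longrightarrow> (x, y) \<in> cn E \<longleftrightarrow> (x, y) \<in> cn E'"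
  shows "ncomp V E = ncomp V E'"
  unfolding ncomp_def
  by (rule card_image_eqrel) (simp add: cn_class_eq assms)

lemma ncomp_map:
  assumes "inj f"
  shows "ncomp (f ` V) (map_prod f f ` E) = ncomp V E"
proof -
  have "ncomp (f ` V) (map_prod f f ` E) = card ((\<lambda>x. cn (map_prod f f ` E) `` {f x}) ` V)"
    unfolding ncomp_def by (simp add: image_image)
  also have "\<dots> = ncomp V E"
    unfolding ncomp_def
    by (rule card_image_eqrel) (simp add: cn_class_eq cn_map_iff[OF assms])
  finally show ?thesis .
qed

lemma ncomp_union:
  assumes fin: "finite V1" "finite V2" and sub: "E1 \<subseteq> V1 \<times> V1" "E2 \<subseteq> V2 \<times> V2"
    and disj: "V1 \<inter> V2 = {}"
  shows "ncomp (V1 \<union> V2) (E1 \<union> E2) = ncomp V1 E1 + ncomp V2 E2"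
proof -
  define c where "c z = cn (E1 \<union> E2) `` {z}" for z
  have ch: "(x, y) \<in> cn (E1 \<union> E2) \<longleftrightarrow> (x, y) \<in> cn E1 \<or> (x, y) \<in> cn E2" for x y
    by (rule cn_union_disj[OF sub disj])
  have "c ` V1 \<inter> c ` V2 = {}"
  proof (rule ccontr)
    assume "c ` V1 \<inter> c ` V2 \<noteq> {}"
    then obtain x y where xy: "x \<in> V1" "y \<in> V2" "c x = c y" by auto
    then have "(x, y) \<in> cn E1 \<or> (x, y) \<in> cn E2" unfolding c_def by (simp add: cn_class_eq ch)
    then show False
    proof
      assume "(x, y) \<in> cn E1"
      from cn_in_V[OF sub(1) this] xy disj show False by auto
    next
      assume "(x, y) \<in> cn E2"
      from cn_in_V[OF sub(2) this] xy disj show False by auto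
    qed
  qed
  then have "card (c ` (V1 \<union> V2)) = card (c ` V1) + card (c ` V2)"
    by (simp add: image_Un card_Un_disjoint fin)
  moreover have "card (c ` V1) = ncomp V1 E1"
    unfolding ncomp_def
  proof (rule card_image_eqrel)
    fix x y assume xy: "x \<in> V1" "y \<in> V1"
    have "(x, y) \<in> cn E2 \<Longrightarrow> x = y" using cn_in_V[OF sub(2)] xy disj by blast
    then show "c x = c y \<longleftrightarrow> cn E1 `` {x} = cn E1 `` {y}"
      unfolding c_def cn_class_eq ch by auto
  qed
  moreover have "card (c ` V2) = ncomp V2 E2"
    unfolding ncomp_def
  proof (rule card_image_eqrel)
    fix x y assume xy: "x \<in> V2" "y \<in> V2"
    have "(x, y) \<in> cn E1 \<Longrightarrow> x = y" using cn_in_V[OF sub(1)] xy disj by blast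
    then show "c x = c y \<longleftrightarrow> cn E2 `` {x} = cn E2 `` {y}"
      unfolding c_def cn_class_eq ch by auto
  qed
  ultimately show ?thesis unfolding ncomp_def c_def by simp
qed

lemma ncomp_insert_same:
  assumes "(a, b) \<in> cn E"
  shows "ncomp V (insert (a, b) E) = ncomp V E"
proof (rule ncomp_cong)
  fix x y
  have ba: "(b, a) \<in> cn E" by (rule cn_sym[OF assms])
  show "(x, y) \<in> cn (insert (a, b) E) \<longleftrightarrow> (x, y) \<in> cn E"
    unfolding cn_insert
    using cn_trans[OF cn_trans[OF _ assms], of x y] cn_trans[OF cn_trans[OF _ ba], of x y] by blast
qed

lemma ncomp_insert_diff:
  assumes fin: "finite V" and ab: "a \<in> V" "b \<in> V" "(a, b) \<notin> cn E"
  shows "ncomp V (insert (a, b) E) + 1 = ncomp V E"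
proof -
  define c where "c z = cn E `` {z}" for z
  define c' where "c' z = cn (insert (a, b) E) `` {z}" for z
  define W where "W = {x \<in> V. (x, a) \<in> cn E \<or> (x, b) \<in> cn E}"
  define U where "U = V - W"
  have VWU: "V = W \<union> U" "W \<inter> U = {}" unfolding U_def W_def by auto
  have finW: "finite W" "finite U" using fin unfolding W_def U_def by auto
  have aW: "a \<in> W" and bW: "b \<in> W" using ab unfolding W_def by auto
  have cW: "c ` W = {c a, c b}"
  proof
    have "c x = c a \<or> c x = c b" if "x \<in> W" for x
      using that unfolding W_def c_def cn_class_eq by blast
    then show "c ` W \<subseteq> {c a, c b}" by blast
    show "{c a, c b} \<subseteq> c ` W" using aW bW by auto
  qed
  have cab: "c a \<noteq> c b" using ab(3) unfolding c_def cn_class_eq .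
  have dis1: "c ` W \<inter> c ` U = {}"
  proof -
    have "c u \<noteq> c a" "c u \<noteq> c b" if "u \<in> U" for u
      using that unfolding U_def W_def c_def cn_class_eq by (auto dest: cn_sym)
    then have "c a \<notin> c ` U" "c b \<notin> c ` U" by (metis imageE)+
    then show ?thesis unfolding cW by blast
  qed
  have c'W: "c' ` W = {c' a}"
  proof -
    have "c' x = c' a" if "x \<in> W" for x
    proof -
      from that have "(x, a) \<in> cn E \<or> (x, b) \<in> cn E" unfolding W_def by auto
      then have "(x, a) \<in> cn (insert (a, b) E)" unfolding cn_insert by auto
      then show ?thesis unfolding c'_def cn_class_eq .
    qed
    then have "c' ` W = (\<lambda>_. c' a) ` W" by (rule image_cong[OF refl])
    then show ?thesis using image_constant[OF aW] by simp
  qed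
  have dis2: "c' ` W \<inter> c' ` U = {}"
  proof -
    have "c' u \<noteq> c' a" if "u \<in> U" for u
    proof
      assume "c' u = c' a"
      then have "(u, a) \<in> cn (insert (a, b) E)" unfolding c'_def cn_class_eq .
      then have "(u, a) \<in> cn E \<or> (u, b) \<in> cn E" unfolding cn_insert by auto
      then show False using that unfolding U_def W_def by auto
    qed
    then show ?thesis using c'W by auto
  qed
  have cU: "card (c' ` U) = card (c ` U)"
  proof (rule card_image_eqrel)
    fix x y assume xy: "x \<in> U" "y \<in> U"
    then have "(x, a) \<notin> cn E" "(x, b) \<notin> cn E" unfolding U_def W_def by auto
    then show "c' x = c' y \<longleftrightarrow> c x = c y"
      unfolding c'_def c_def cn_class_eq cn_insert by auto
  qed
  have "ncomp V (insert (a, b) E) = card (c' ` W) + card (c' ` U)"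
    unfolding ncomp_def c'_def[symmetric] using VWU dis2 finW
    by (simp add: image_Un card_Un_disjoint)
  moreover have "ncomp V E = card (c ` W) + card (c ` U)"
    unfolding ncomp_def c_def[symmetric] using VWU dis1 finW
    by (simp add: image_Un card_Un_disjoint)
  ultimately show ?thesis using cW c'W cab cU by simp
qed

lemma ncomp_ge2:
  assumes fin: "finite V" and ab: "a \<in> V" "b \<in> V" "(a, b) \<notin> cn E"
  shows "ncomp V E \<ge> 2"
proof -
  have "cn E `` {a} \<noteq> cn E `` {b}" using ab(3) cn_class_eq by metis
  then have "card {cn E `` {a}, cn E `` {b}} = 2" by simp
  moreover have "{cn E `` {a}, cn E `` {b}} \<subseteq> (\<lambda>x. cn E `` {x}) ` V" using ab by auto
  ultimately show ?thesis unfolding ncomp_def using fin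
    by (metis card_mono finite_imageI)
qed

lemma cn_empty: "(x, y) \<in> cn {} \<longleftrightarrow> x = y"
  by (simp add: cn_def)

lemma ncomp_empty:
  assumes "finite V"
  shows "ncomp V {} = card V"
proof -
  have "ncomp V {} = card ((\<lambda>x. {x}) ` V)"
    unfolding ncomp_def by (rule card_image_eqrel) (simp add: cn_class_eq cn_empty)
  also have "\<dots> = card V" by (rule card_image) (simp add: inj_on_def)
  finally show ?thesis .
qed


definition VV :: "nat \<Rightarrow> slot set" where "VV n = {..<n} \<times> UNIV"

definition RS :: "tdiag \<Rightarrow> nat set \<Rightarrow> (slot \<times> slot) set" where
  "RS D S = arcs D \<union> (\<Union>i<ncr D. smoothing S i)"

definition goodr :: "(slot \<times> slot) set \<Rightarrow> slot \<Rightarrow> slot \<Rightarrow> slot \<Rightarrow> slot \<Rightarrow> bool" where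
  "goodr r nw ne sw se \<longleftrightarrow>
     ((nw, ne) \<in> r \<and> (sw, se) \<in> r \<and> (nw, sw) \<notin> r) \<or>
     ((nw, sw) \<in> r \<and> (ne, se) \<in> r \<and> (nw, ne) \<notin> r)"

definition wfd :: "tdiag \<Rightarrow> bool" where
  "wfd D \<longleftrightarrow> arcs D \<subseteq> VV (ncr D) \<times> VV (ncr D) \<and>
     bnw D \<in> VV (ncr D) \<and> bne D \<in> VV (ncr D) \<and> bsw D \<in> VV (ncr D) \<and> bse D \<in> VV (ncr D)"

lemma finite_UNIV_corner[simp]: "finite (UNIV :: corner set)"
proof -
  have "UNIV = {NW, NE, SW, SE}" by (auto intro: corner.exhaust)
  then show ?thesis by (metis finite.emptyI finite.insertI)
qed

lemma UNIV_corner: "(UNIV :: corner set) = {NW, NE, SW, SE}"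
  by (auto intro: corner.exhaust)

lemma finite_VV[simp]: "finite (VV n)"
  by (simp add: VV_def)

lemma inj_shift: "inj (shift_slot k)"
  by (auto simp: inj_def shift_slot_def prod_eq_iff)

lemma VV_add: "VV (k + n) = VV k \<union> shift_slot k ` VV n"
proof
  show "VV (k + n) \<subseteq> VV k \<union> shift_slot k ` VV n"
  proof
    fix x assume "x \<in> VV (k + n)"
    then obtain i c where x: "x = (i, c)" "i < k + n" by (auto simp: VV_def)
    show "x \<in> VV k \<union> shift_slot k ` VV n"
    proof (cases "i < k")
      case True then show ?thesis using x by (simp add: VV_def)
    next
      case False
      then have "x = shift_slot k (i - k, c)" using x by (simp add: shift_slot_def)
      moreover have "(i - k, c) \<in> VV n" using x False by (simp add: VV_def)
      ultimately show ?thesis by blast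
    qed
  qed
  show "VV k \<union> shift_slot k ` VV n \<subseteq> VV (k + n)"
    by (auto simp: VV_def shift_slot_def)
qed

lemma VV_disj: "VV k \<inter> shift_slot k ` VV n = {}"
  by (auto simp: VV_def shift_slot_def)

lemma smoothing_sub: "i < n \<Longrightarrow> smoothing S i \<subseteq> VV n \<times> VV n"
  by (auto simp: smoothing_def VV_def)

lemma smoothing_low: "i < k \<Longrightarrow> smoothing S i = smoothing (S \<inter> {..<k}) i"
  by (simp add: smoothing_def)

lemma smoothing_high:
  "smoothing S (j + k) = map_prod (shift_slot k) (shift_slot k) ` smoothing {j. j + k \<in> S} j"
  by (simp add: smoothing_def shift_slot_def)

lemma lessThan_add: "{..<k + n} = {..<k} \<union> (\<lambda>j. j + k) ` {..<n::nat}"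
proof -
  have "i \<in> (\<lambda>j. j + k) ` {..<n}" if "k \<le> i" "i < k + n" for i
    using that by (intro rev_image_eqI[of "i - k"]) auto
  then show ?thesis by (auto simp: not_less) (meson not_less)
qed

lemma smooth_split:
  "(\<Union>i<k + n. smoothing S i) =
     (\<Union>i<k. smoothing (S \<inter> {..<k}) i) \<union>
     map_prod (shift_slot k) (shift_slot k) ` (\<Union>j<n. smoothing {j. j + k \<in> S} j)"
proof -
  have "(\<Union>i<k + n. smoothing S i) = (\<Union>i<k. smoothing S i) \<union> (\<Union>j<n. smoothing S (j + k))"
    unfolding lessThan_add by auto
  also have "(\<Union>i<k. smoothing S i) = (\<Union>i<k. smoothing (S \<inter> {..<k}) i)"
    by (rule SUP_cong[OF refl]) (simp add: smoothing_low[symmetric])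
  also have "(\<Union>j<n. smoothing S (j + k)) =
      map_prod (shift_slot k) (shift_slot k) ` (\<Union>j<n. smoothing {j. j + k \<in> S} j)"
    unfolding smoothing_high image_UN ..
  finally show ?thesis .
qed

lemma RS_sub: "wfd D \<Longrightarrow> RS D S \<subseteq> VV (ncr D) \<times> VV (ncr D)"
  unfolding RS_def wfd_def using smoothing_sub by blast

lemma shift_VV: "x \<in> VV n \<Longrightarrow> shift_slot k x \<in> VV (k + n)"
  by (auto simp: VV_def shift_slot_def)

lemma VV_mono: "x \<in> VV k \<Longrightarrow> x \<in> VV (k + n)"
  by (auto simp: VV_def)

lemma wfd_tdiag: "wfd (tdiag_of T)"
proof (induction T)
  case One
  then show ?case by (simp add: wfd_def VV_def)
next
  case (TSum T R)
  let ?A = "tdiag_of T" and ?B = "tdiag_of R"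
  let ?f = "shift_slot (ncr ?A)"
  have 1: "map_prod ?f ?f ` arcs ?B \<subseteq> VV (ncr ?A + ncr ?B) \<times> VV (ncr ?A + ncr ?B)"
    using TSum.IH(2) shift_VV unfolding wfd_def by fastforce
  have 2: "arcs ?A \<subseteq> VV (ncr ?A + ncr ?B) \<times> VV (ncr ?A + ncr ?B)"
    using TSum.IH(1) VV_mono unfolding wfd_def by blast
  show ?case using 1 2 TSum.IH unfolding wfd_def
    by (simp add: Let_def VV_mono shift_VV)
next
  case (VSum T R)
  let ?A = "tdiag_of T" and ?B = "tdiag_of R"
  let ?f = "shift_slot (ncr ?A)"
  have 1: "map_prod ?f ?f ` arcs ?B \<subseteq> VV (ncr ?A + ncr ?B) \<times> VV (ncr ?A + ncr ?B)"
    using VSum.IH(2) shift_VV unfolding wfd_def by fastforce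
  have 2: "arcs ?A \<subseteq> VV (ncr ?A + ncr ?B) \<times> VV (ncr ?A + ncr ?B)"
    using VSum.IH(1) VV_mono unfolding wfd_def by blast
  show ?case using 1 2 VSum.IH unfolding wfd_def
    by (simp add: Let_def VV_mono shift_VV)
qed

lemma RS_TSum:
  fixes T R :: ctangle and S :: "nat set"
  defines "A \<equiv> tdiag_of T" and "B \<equiv> tdiag_of R"
  defines "f \<equiv> shift_slot (ncr A)"
  shows "RS (tdiag_of (TSum T R)) S =
    insert (bse A, f (bsw B)) (insert (bne A, f (bnw B))
      (RS A (S \<inter> {..<ncr A}) \<union> map_prod f f ` RS B {j. j + ncr A \<in> S}))"
  unfolding RS_def A_def B_def f_def
  by (simp add: Let_def smooth_split image_Un) blast

lemma RS_VSum:
  fixes T R :: ctangle and S :: "nat set"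
  defines "A \<equiv> tdiag_of T" and "B \<equiv> tdiag_of R"
  defines "f \<equiv> shift_slot (ncr A)"
  shows "RS (tdiag_of (VSum T R)) S =
    insert (bse A, f (bne B)) (insert (bsw A, f (bnw B))
      (RS A (S \<inter> {..<ncr A}) \<union> map_prod f f ` RS B {j. j + ncr A \<in> S}))"
  unfolding RS_def A_def B_def f_def
  by (simp add: Let_def smooth_split image_Un) blast


lemma glue_base:
  fixes RA RB :: "('a \<times> 'a) set" and f :: "'a \<Rightarrow> 'a"
  assumes sub: "RA \<subseteq> VA \<times> VA" "RB \<subseteq> VB \<times> VB" and disj: "VA \<inter> f ` VB = {}"
    and inj: "inj f"
  defines "E0 \<equiv> RA \<union> map_prod f f ` RB"
  shows "x \<in> VA \<Longrightarrow> y \<in> VA \<Longrightarrow> (x, y) \<in> cn E0 \<longleftrightarrow> (x, y) \<in> cn RA"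
    and "x \<in> VB \<Longrightarrow> y \<in> VB \<Longrightarrow> (f x, f y) \<in> cn E0 \<longleftrightarrow> (x, y) \<in> cn RB"
    and "x \<in> VA \<Longrightarrow> y \<in> VB \<Longrightarrow> (x, f y) \<notin> cn E0"
    and "x \<in> VA \<Longrightarrow> y \<in> VB \<Longrightarrow> (f y, x) \<notin> cn E0"
proof -
  have subf: "map_prod f f ` RB \<subseteq> f ` VB \<times> f ` VB" using sub(2) by auto
  have c0: "(u, v) \<in> cn E0 \<longleftrightarrow> (u, v) \<in> cn RA \<or> (u, v) \<in> cn (map_prod f f ` RB)" for u v
    unfolding E0_def by (rule cn_union_disj[OF sub(1) subf disj])
  show "x \<in> VA \<Longrightarrow> y \<in> VA \<Longrightarrow> (x, y) \<in> cn E0 \<longleftrightarrow> (x, y) \<in> cn RA"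
  proof -
    assume xy: "x \<in> VA" "y \<in> VA"
    have "(x, y) \<in> cn (map_prod f f ` RB) \<Longrightarrow> x = y"
      using cn_in_V[OF subf, of x y] xy disj by blast
    then show ?thesis unfolding c0 by auto
  qed
  show "x \<in> VB \<Longrightarrow> y \<in> VB \<Longrightarrow> (f x, f y) \<in> cn E0 \<longleftrightarrow> (x, y) \<in> cn RB"
  proof -
    assume xy: "x \<in> VB" "y \<in> VB"
    have "(f x, f y) \<in> cn RA \<Longrightarrow> x = y"
    proof -
      assume "(f x, f y) \<in> cn RA"
      from cn_in_V[OF sub(1) this] have "f x = f y \<or> f x \<in> VA" by blast
      then show "x = y" using xy disj inj by (auto simp: inj_eq)
    qed
    then show ?thesis unfolding c0 cn_map_iff[OF inj] by auto
  qed
  show "x \<in> VA \<Longrightarrow> y \<in> VB \<Longrightarrow> (x, f y) \<notin> cn E0"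
  proof -
    assume xy: "x \<in> VA" "y \<in> VB"
    have 1: "(x, f y) \<notin> cn RA"
      using cn_in_V[OF sub(1), of x "f y"] xy disj by blast
    have 2: "(x, f y) \<notin> cn (map_prod f f ` RB)"
      using cn_in_V[OF subf, of x "f y"] xy disj by blast
    show ?thesis unfolding c0 using 1 2 by blast
  qed
  show "x \<in> VA \<Longrightarrow> y \<in> VB \<Longrightarrow> (f y, x) \<notin> cn E0"
  proof -
    assume xy: "x \<in> VA" "y \<in> VB"
    have 1: "(f y, x) \<notin> cn RA"
      using cn_in_V[OF sub(1), of "f y" x] xy disj by blast
    have 2: "(f y, x) \<notin> cn (map_prod f f ` RB)"
      using cn_in_V[OF subf, of "f y" x] xy disj by blast
    show ?thesis unfolding c0 using 1 2 by blast
  qed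
qed

lemma cn_iff_class: "(x, y) \<in> cn E \<longleftrightarrow> cn E `` {x} = cn E `` {y}"
  by (simp add: cn_class_eq)

lemma goodr_classes:
  assumes "goodr (cn E) nw ne sw se"
  shows "(nw, ne) \<in> cn E \<Longrightarrow> cn E `` {ne} = cn E `` {nw} \<and> cn E `` {se} = cn E `` {sw} \<and>
            cn E `` {nw} \<noteq> cn E `` {sw}"
    and "(nw, ne) \<notin> cn E \<Longrightarrow> cn E `` {sw} = cn E `` {nw} \<and> cn E `` {se} = cn E `` {ne} \<and>
            cn E `` {nw} \<noteq> cn E `` {ne}"
  using assms unfolding goodr_def cn_iff_class by auto


lemma glue_T:
  fixes RA RB :: "(slot \<times> slot) set" and f :: "slot \<Rightarrow> slot"
  assumes sub: "RA \<subseteq> VA \<times> VA" "RB \<subseteq> VB \<times> VB" and disj: "VA \<inter> f ` VB = {}"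
    and inj: "inj f" and fin: "finite VA" "finite VB"
    and pts: "a1 \<in> VA" "a2 \<in> VA" "a3 \<in> VA" "a4 \<in> VA" "b1 \<in> VB" "b2 \<in> VB" "b3 \<in> VB" "b4 \<in> VB"
    and gA: "goodr (cn RA) a1 a2 a3 a4" and gB: "goodr (cn RB) b1 b2 b3 b4"
  defines "E0 \<equiv> RA \<union> map_prod f f ` RB"
  defines "E1 \<equiv> insert (a2, f b1) E0"
  defines "E \<equiv> insert (a4, f b3) E1"
  shows "goodr (cn E) a1 (f b2) a3 (f b4) \<and> ((a1, f b2) \<in> cn E \<longleftrightarrow> (a1, a2) \<in> cn RA \<and> (b1, b2) \<in> cn RB) \<and>
         ncomp (VA \<union> f ` VB) E + (if (a1, a2) \<notin> cn RA \<and> (b1, b2) \<notin> cn RB then 1 else 2) = ncomp VA RA + ncomp VB RB"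
proof -
  note gb = glue_base[OF sub disj inj, folded E0_def]
  define cl where "cl z = cn E0 `` {z}" for z
  have clA: "cl x = cl y \<longleftrightarrow> cn RA `` {x} = cn RA `` {y}" if "x \<in> VA" "y \<in> VA" for x y
    unfolding cl_def cn_iff_class[symmetric] using gb(1)[OF that] cn_iff_class by blast
  have clB: "cl (f x) = cl (f y) \<longleftrightarrow> cn RB `` {x} = cn RB `` {y}" if "x \<in> VB" "y \<in> VB" for x y
    unfolding cl_def cn_iff_class[symmetric] using gb(2)[OF that] cn_iff_class by blast
  have clX: "(cl x = cl (f y)) = False" if "x \<in> VA" "y \<in> VB" for x y
    unfolding cl_def cn_iff_class[symmetric] using gb(3)[OF that] by blast
  have clX': "(cl (f y) = cl x) = False" if "x \<in> VA" "y \<in> VB" for x y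
    unfolding cl_def cn_iff_class[symmetric] using gb(4)[OF that] by blast
  have ins: "(x, y) \<in> cn E \<longleftrightarrow> (cl x = cl y \<or> (cl x = cl (fst (a2, f b1)) \<and> cl (snd (a2, f b1)) = cl y) \<or> (cl x = cl (snd (a2, f b1)) \<and> cl (fst (a2, f b1)) = cl y)) \<or>
     ((cl x = cl (fst (a4, f b3)) \<or> (cl x = cl (fst (a2, f b1)) \<and> cl (snd (a2, f b1)) = cl (fst (a4, f b3))) \<or> (cl x = cl (snd (a2, f b1)) \<and> cl (fst (a2, f b1)) = cl (fst (a4, f b3)))) \<and>
      (cl (snd (a4, f b3)) = cl y \<or> (cl (snd (a4, f b3)) = cl (fst (a2, f b1)) \<and> cl (snd (a2, f b1)) = cl y) \<or> (cl (snd (a4, f b3)) = cl (snd (a2, f b1)) \<and> cl (fst (a2, f b1)) = cl y))) \<or>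
     ((cl x = cl (snd (a4, f b3)) \<or> (cl x = cl (fst (a2, f b1)) \<and> cl (snd (a2, f b1)) = cl (snd (a4, f b3))) \<or> (cl x = cl (snd (a2, f b1)) \<and> cl (fst (a2, f b1)) = cl (snd (a4, f b3)))) \<and>
      (cl (fst (a4, f b3)) = cl y \<or> (cl (fst (a4, f b3)) = cl (fst (a2, f b1)) \<and> cl (snd (a2, f b1)) = cl y) \<or> (cl (fst (a4, f b3)) = cl (snd (a2, f b1)) \<and> cl (fst (a2, f b1)) = cl y)))" for x y
    unfolding E_def E1_def cn_insert unfolding cl_def cn_iff_class[symmetric] by simp
  have ins1: "(x, y) \<in> cn E1 \<longleftrightarrow> (cl x = cl y \<or> (cl x = cl (fst (a2, f b1)) \<and> cl (snd (a2, f b1)) = cl y) \<or> (cl x = cl (snd (a2, f b1)) \<and> cl (fst (a2, f b1)) = cl y))" for x y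
    unfolding E1_def cn_insert unfolding cl_def cn_iff_class[symmetric] by simp
  let ?G = "goodr (cn E) a1 (f b2) a3 (f b4)"
  let ?P = "(a1, f b2) \<in> cn E \<longleftrightarrow> (a1, a2) \<in> cn RA \<and> (b1, b2) \<in> cn RB"
  let ?Q = "(a4, f b3) \<in> cn E1 \<longleftrightarrow> (a1, a2) \<notin> cn RA \<and> (b1, b2) \<notin> cn RB"

  have h11: "?G \<and> ?P \<and> ?Q" if pA: "(a1, a2) \<in> cn RA" and pB: "(b1, b2) \<in> cn RB"
  proof -
    have eA: "cl a2 = cl a1" "cl a4 = cl a3" "cl a1 \<noteq> cl a3" "cl a3 \<noteq> cl a1"
      using goodr_classes(1)[OF gA pA] by (auto simp add: clA pts)
    have eB: "cl (f b2) = cl (f b1)" "cl (f b4) = cl (f b3)" "cl (f b1) \<noteq> cl (f b3)" "cl (f b3) \<noteq> cl (f b1)"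
      using goodr_classes(1)[OF gB pB] by (auto simp add: clB pts)
    have G: ?G
      unfolding goodr_def ins using eA eB by (simp add: clX clX' pts)
    have P: ?P
      unfolding ins using eA eB pA pB by (simp add: clX clX' pts)
    have Q: ?Q
      unfolding ins1 using eA eB pA pB by (simp add: clX clX' pts)
    show ?thesis using G P Q by blast
  qed
  have h10: "?G \<and> ?P \<and> ?Q" if pA: "(a1, a2) \<in> cn RA" and pB: "(b1, b2) \<notin> cn RB"
  proof -
    have eA: "cl a2 = cl a1" "cl a4 = cl a3" "cl a1 \<noteq> cl a3" "cl a3 \<noteq> cl a1"
      using goodr_classes(1)[OF gA pA] by (auto simp add: clA pts)
    have eB: "cl (f b3) = cl (f b1)" "cl (f b4) = cl (f b2)" "cl (f b1) \<noteq> cl (f b2)" "cl (f b2) \<noteq> cl (f b1)"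
      using goodr_classes(2)[OF gB pB] by (auto simp add: clB pts)
    have G: ?G
      unfolding goodr_def ins using eA eB by (simp add: clX clX' pts)
    have P: ?P
      unfolding ins using eA eB pA pB by (simp add: clX clX' pts)
    have Q: ?Q
      unfolding ins1 using eA eB pA pB by (simp add: clX clX' pts)
    show ?thesis using G P Q by blast
  qed
  have h01: "?G \<and> ?P \<and> ?Q" if pA: "(a1, a2) \<notin> cn RA" and pB: "(b1, b2) \<in> cn RB"
  proof -
    have eA: "cl a3 = cl a1" "cl a4 = cl a2" "cl a1 \<noteq> cl a2" "cl a2 \<noteq> cl a1"
      using goodr_classes(2)[OF gA pA] by (auto simp add: clA pts)
    have eB: "cl (f b2) = cl (f b1)" "cl (f b4) = cl (f b3)" "cl (f b1) \<noteq> cl (f b3)" "cl (f b3) \<noteq> cl (f b1)"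
      using goodr_classes(1)[OF gB pB] by (auto simp add: clB pts)
    have G: ?G
      unfolding goodr_def ins using eA eB by (simp add: clX clX' pts)
    have P: ?P
      unfolding ins using eA eB pA pB by (simp add: clX clX' pts)
    have Q: ?Q
      unfolding ins1 using eA eB pA pB by (simp add: clX clX' pts)
    show ?thesis using G P Q by blast
  qed
  have h00: "?G \<and> ?P \<and> ?Q" if pA: "(a1, a2) \<notin> cn RA" and pB: "(b1, b2) \<notin> cn RB"
  proof -
    have eA: "cl a3 = cl a1" "cl a4 = cl a2" "cl a1 \<noteq> cl a2" "cl a2 \<noteq> cl a1"
      using goodr_classes(2)[OF gA pA] by (auto simp add: clA pts)
    have eB: "cl (f b3) = cl (f b1)" "cl (f b4) = cl (f b2)" "cl (f b1) \<noteq> cl (f b2)" "cl (f b2) \<noteq> cl (f b1)"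
      using goodr_classes(2)[OF gB pB] by (auto simp add: clB pts)
    have G: ?G
      unfolding goodr_def ins using eA eB by (simp add: clX clX' pts)
    have P: ?P
      unfolding ins using eA eB pA pB by (simp add: clX clX' pts)
    have Q: ?Q
      unfolding ins1 using eA eB pA pB by (simp add: clX clX' pts)
    show ?thesis using G P Q by blast
  qed
  have GPQ: "?G \<and> ?P \<and> ?Q" using h11 h10 h01 h00 by blast
  have subf: "map_prod f f ` RB \<subseteq> f ` VB \<times> f ` VB" using sub(2) by auto
  have n0: "ncomp (VA \<union> f ` VB) E0 = ncomp VA RA + ncomp VB RB"
    unfolding E0_def using ncomp_union[OF fin(1) _ sub(1) subf disj] fin(2) ncomp_map[OF inj] by simp
  have n1: "ncomp (VA \<union> f ` VB) E1 + 1 = ncomp (VA \<union> f ` VB) E0"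
    unfolding E1_def by (rule ncomp_insert_diff) (use fin pts gb(3,4) in auto)
  show ?thesis
  proof (cases "(a4, f b3) \<in> cn E1")
    case True
    then have "ncomp (VA \<union> f ` VB) E = ncomp (VA \<union> f ` VB) E1"
      unfolding E_def by (simp add: ncomp_insert_same)
    then show ?thesis using GPQ True n0 n1 by simp
  next
    case False
    then have "ncomp (VA \<union> f ` VB) E + 1 = ncomp (VA \<union> f ` VB) E1"
      unfolding E_def by (rule ncomp_insert_diff[rotated 3]) (use fin pts in auto)
    then show ?thesis using GPQ False n0 n1 by simp
  qed
qed

lemma glue_V:
  fixes RA RB :: "(slot \<times> slot) set" and f :: "slot \<Rightarrow> slot"
  assumes sub: "RA \<subseteq> VA \<times> VA" "RB \<subseteq> VB \<times> VB" and disj: "VA \<inter> f ` VB = {}"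
    and inj: "inj f" and fin: "finite VA" "finite VB"
    and pts: "a1 \<in> VA" "a2 \<in> VA" "a3 \<in> VA" "a4 \<in> VA" "b1 \<in> VB" "b2 \<in> VB" "b3 \<in> VB" "b4 \<in> VB"
    and gA: "goodr (cn RA) a1 a2 a3 a4" and gB: "goodr (cn RB) b1 b2 b3 b4"
  defines "E0 \<equiv> RA \<union> map_prod f f ` RB"
  defines "E1 \<equiv> insert (a3, f b1) E0"
  defines "E \<equiv> insert (a4, f b2) E1"
  shows "goodr (cn E) a1 a2 (f b3) (f b4) \<and> ((a1, a2) \<in> cn E \<longleftrightarrow> (a1, a2) \<in> cn RA \<or> (b1, b2) \<in> cn RB) \<and>
         ncomp (VA \<union> f ` VB) E + (if (a1, a2) \<in> cn RA \<and> (b1, b2) \<in> cn RB then 1 else 2) = ncomp VA RA + ncomp VB RB"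
proof -
  note gb = glue_base[OF sub disj inj, folded E0_def]
  define cl where "cl z = cn E0 `` {z}" for z
  have clA: "cl x = cl y \<longleftrightarrow> cn RA `` {x} = cn RA `` {y}" if "x \<in> VA" "y \<in> VA" for x y
    unfolding cl_def cn_iff_class[symmetric] using gb(1)[OF that] cn_iff_class by blast
  have clB: "cl (f x) = cl (f y) \<longleftrightarrow> cn RB `` {x} = cn RB `` {y}" if "x \<in> VB" "y \<in> VB" for x y
    unfolding cl_def cn_iff_class[symmetric] using gb(2)[OF that] cn_iff_class by blast
  have clX: "(cl x = cl (f y)) = False" if "x \<in> VA" "y \<in> VB" for x y
    unfolding cl_def cn_iff_class[symmetric] using gb(3)[OF that] by blast
  have clX': "(cl (f y) = cl x) = False" if "x \<in> VA" "y \<in> VB" for x y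
    unfolding cl_def cn_iff_class[symmetric] using gb(4)[OF that] by blast
  have ins: "(x, y) \<in> cn E \<longleftrightarrow> (cl x = cl y \<or> (cl x = cl (fst (a3, f b1)) \<and> cl (snd (a3, f b1)) = cl y) \<or> (cl x = cl (snd (a3, f b1)) \<and> cl (fst (a3, f b1)) = cl y)) \<or>
     ((cl x = cl (fst (a4, f b2)) \<or> (cl x = cl (fst (a3, f b1)) \<and> cl (snd (a3, f b1)) = cl (fst (a4, f b2))) \<or> (cl x = cl (snd (a3, f b1)) \<and> cl (fst (a3, f b1)) = cl (fst (a4, f b2)))) \<and>
      (cl (snd (a4, f b2)) = cl y \<or> (cl (snd (a4, f b2)) = cl (fst (a3, f b1)) \<and> cl (snd (a3, f b1)) = cl y) \<or> (cl (snd (a4, f b2)) = cl (snd (a3, f b1)) \<and> cl (fst (a3, f b1)) = cl y))) \<or>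
     ((cl x = cl (snd (a4, f b2)) \<or> (cl x = cl (fst (a3, f b1)) \<and> cl (snd (a3, f b1)) = cl (snd (a4, f b2))) \<or> (cl x = cl (snd (a3, f b1)) \<and> cl (fst (a3, f b1)) = cl (snd (a4, f b2)))) \<and>
      (cl (fst (a4, f b2)) = cl y \<or> (cl (fst (a4, f b2)) = cl (fst (a3, f b1)) \<and> cl (snd (a3, f b1)) = cl y) \<or> (cl (fst (a4, f b2)) = cl (snd (a3, f b1)) \<and> cl (fst (a3, f b1)) = cl y)))" for x y
    unfolding E_def E1_def cn_insert unfolding cl_def cn_iff_class[symmetric] by simp
  have ins1: "(x, y) \<in> cn E1 \<longleftrightarrow> (cl x = cl y \<or> (cl x = cl (fst (a3, f b1)) \<and> cl (snd (a3, f b1)) = cl y) \<or> (cl x = cl (snd (a3, f b1)) \<and> cl (fst (a3, f b1)) = cl y))" for x y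
    unfolding E1_def cn_insert unfolding cl_def cn_iff_class[symmetric] by simp
  let ?G = "goodr (cn E) a1 a2 (f b3) (f b4)"
  let ?P = "(a1, a2) \<in> cn E \<longleftrightarrow> (a1, a2) \<in> cn RA \<or> (b1, b2) \<in> cn RB"
  let ?Q = "(a4, f b2) \<in> cn E1 \<longleftrightarrow> (a1, a2) \<in> cn RA \<and> (b1, b2) \<in> cn RB"

  have h11: "?G \<and> ?P \<and> ?Q" if pA: "(a1, a2) \<in> cn RA" and pB: "(b1, b2) \<in> cn RB"
  proof -
    have eA: "cl a2 = cl a1" "cl a4 = cl a3" "cl a1 \<noteq> cl a3" "cl a3 \<noteq> cl a1"
      using goodr_classes(1)[OF gA pA] by (auto simp add: clA pts)
    have eB: "cl (f b2) = cl (f b1)" "cl (f b4) = cl (f b3)" "cl (f b1) \<noteq> cl (f b3)" "cl (f b3) \<noteq> cl (f b1)"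
      using goodr_classes(1)[OF gB pB] by (auto simp add: clB pts)
    have G: ?G
      unfolding goodr_def ins using eA eB by (simp add: clX clX' pts)
    have P: ?P
      unfolding ins using eA eB pA pB by (simp add: clX clX' pts)
    have Q: ?Q
      unfolding ins1 using eA eB pA pB by (simp add: clX clX' pts)
    show ?thesis using G P Q by blast
  qed
  have h10: "?G \<and> ?P \<and> ?Q" if pA: "(a1, a2) \<in> cn RA" and pB: "(b1, b2) \<notin> cn RB"
  proof -
    have eA: "cl a2 = cl a1" "cl a4 = cl a3" "cl a1 \<noteq> cl a3" "cl a3 \<noteq> cl a1"
      using goodr_classes(1)[OF gA pA] by (auto simp add: clA pts)
    have eB: "cl (f b3) = cl (f b1)" "cl (f b4) = cl (f b2)" "cl (f b1) \<noteq> cl (f b2)" "cl (f b2) \<noteq> cl (f b1)"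
      using goodr_classes(2)[OF gB pB] by (auto simp add: clB pts)
    have G: ?G
      unfolding goodr_def ins using eA eB by (simp add: clX clX' pts)
    have P: ?P
      unfolding ins using eA eB pA pB by (simp add: clX clX' pts)
    have Q: ?Q
      unfolding ins1 using eA eB pA pB by (simp add: clX clX' pts)
    show ?thesis using G P Q by blast
  qed
  have h01: "?G \<and> ?P \<and> ?Q" if pA: "(a1, a2) \<notin> cn RA" and pB: "(b1, b2) \<in> cn RB"
  proof -
    have eA: "cl a3 = cl a1" "cl a4 = cl a2" "cl a1 \<noteq> cl a2" "cl a2 \<noteq> cl a1"
      using goodr_classes(2)[OF gA pA] by (auto simp add: clA pts)
    have eB: "cl (f b2) = cl (f b1)" "cl (f b4) = cl (f b3)" "cl (f b1) \<noteq> cl (f b3)" "cl (f b3) \<noteq> cl (f b1)"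
      using goodr_classes(1)[OF gB pB] by (auto simp add: clB pts)
    have G: ?G
      unfolding goodr_def ins using eA eB by (simp add: clX clX' pts)
    have P: ?P
      unfolding ins using eA eB pA pB by (simp add: clX clX' pts)
    have Q: ?Q
      unfolding ins1 using eA eB pA pB by (simp add: clX clX' pts)
    show ?thesis using G P Q by blast
  qed
  have h00: "?G \<and> ?P \<and> ?Q" if pA: "(a1, a2) \<notin> cn RA" and pB: "(b1, b2) \<notin> cn RB"
  proof -
    have eA: "cl a3 = cl a1" "cl a4 = cl a2" "cl a1 \<noteq> cl a2" "cl a2 \<noteq> cl a1"
      using goodr_classes(2)[OF gA pA] by (auto simp add: clA pts)
    have eB: "cl (f b3) = cl (f b1)" "cl (f b4) = cl (f b2)" "cl (f b1) \<noteq> cl (f b2)" "cl (f b2) \<noteq> cl (f b1)"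
      using goodr_classes(2)[OF gB pB] by (auto simp add: clB pts)
    have G: ?G
      unfolding goodr_def ins using eA eB by (simp add: clX clX' pts)
    have P: ?P
      unfolding ins using eA eB pA pB by (simp add: clX clX' pts)
    have Q: ?Q
      unfolding ins1 using eA eB pA pB by (simp add: clX clX' pts)
    show ?thesis using G P Q by blast
  qed
  have GPQ: "?G \<and> ?P \<and> ?Q" using h11 h10 h01 h00 by blast
  have subf: "map_prod f f ` RB \<subseteq> f ` VB \<times> f ` VB" using sub(2) by auto
  have n0: "ncomp (VA \<union> f ` VB) E0 = ncomp VA RA + ncomp VB RB"
    unfolding E0_def using ncomp_union[OF fin(1) _ sub(1) subf disj] fin(2) ncomp_map[OF inj] by simp
  have n1: "ncomp (VA \<union> f ` VB) E1 + 1 = ncomp (VA \<union> f ` VB) E0"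
    unfolding E1_def by (rule ncomp_insert_diff) (use fin pts gb(3,4) in auto)
  show ?thesis
  proof (cases "(a4, f b2) \<in> cn E1")
    case True
    then have "ncomp (VA \<union> f ` VB) E = ncomp (VA \<union> f ` VB) E1"
      unfolding E_def by (simp add: ncomp_insert_same)
    then show ?thesis using GPQ True n0 n1 by simp
  next
    case False
    then have "ncomp (VA \<union> f ` VB) E + 1 = ncomp (VA \<union> f ` VB) E1"
      unfolding E_def by (rule ncomp_insert_diff[rotated 3]) (use fin pts in auto)
    then show ?thesis using GPQ False n0 n1 by simp
  qed
qed


definition good :: "tdiag \<Rightarrow> nat set \<Rightarrow> bool" where
  "good D S \<longleftrightarrow> goodr (cn (RS D S)) (bnw D) (bne D) (bsw D) (bse D)"

definition p0 :: "tdiag \<Rightarrow> nat set \<Rightarrow> bool" where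
  "p0 D S \<longleftrightarrow> (bnw D, bne D) \<in> cn (RS D S)"

definition cnt :: "tdiag \<Rightarrow> nat set \<Rightarrow> nat" where
  "cnt D S = ncomp (VV (ncr D)) (RS D S)"

lemma card_VV1: "card (VV 1) = 4"
  by (simp add: VV_def UNIV_corner card_cartesian_product)

lemma one_state:
  "good (tdiag_of One) S \<and> (p0 (tdiag_of One) S \<longleftrightarrow> 0 \<in> S) \<and> cnt (tdiag_of One) S = 2"
proof -
  have V: "VV (ncr (tdiag_of One)) = VV 1" by simp
  show ?thesis
  proof (cases "0 \<in> S")
    case True
    then have R: "RS (tdiag_of One) S = insert ((0, NW), (0, NE)) (insert ((0, SW), (0, SE)) {})"
      by (auto simp: RS_def smoothing_def)
    have n1: "ncomp (VV 1) (insert ((0, SW), (0, SE)) {}) + 1 = ncomp (VV 1) {}"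
      by (rule ncomp_insert_diff) (auto simp: VV_def cn_empty)
    have n2: "ncomp (VV 1) (insert ((0, NW), (0, NE)) (insert ((0, SW), (0, SE)) {})) + 1
        = ncomp (VV 1) (insert ((0, SW), (0, SE)) {})"
      by (rule ncomp_insert_diff) (auto simp: VV_def cn_empty cn_insert)
    have "cnt (tdiag_of One) S = 2"
      unfolding cnt_def R V using n1 n2 ncomp_empty[of "VV 1"] card_VV1 by simp
    then show ?thesis using True
      unfolding good_def p0_def R by (simp add: goodr_def cn_insert cn_empty)
  next
    case False
    then have R: "RS (tdiag_of One) S = insert ((0, NW), (0, SW)) (insert ((0, NE), (0, SE)) {})"
      by (auto simp: RS_def smoothing_def)
    have n1: "ncomp (VV 1) (insert ((0, NE), (0, SE)) {}) + 1 = ncomp (VV 1) {}"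
      by (rule ncomp_insert_diff) (auto simp: VV_def cn_empty)
    have n2: "ncomp (VV 1) (insert ((0, NW), (0, SW)) (insert ((0, NE), (0, SE)) {})) + 1
        = ncomp (VV 1) (insert ((0, NE), (0, SE)) {})"
      by (rule ncomp_insert_diff) (auto simp: VV_def cn_empty cn_insert)
    have "cnt (tdiag_of One) S = 2"
      unfolding cnt_def R V using n1 n2 ncomp_empty[of "VV 1"] card_VV1 by simp
    then show ?thesis using False
      unfolding good_def p0_def R by (simp add: goodr_def cn_insert cn_empty)
  qed
qed

lemma tsum_state:
  fixes T R :: ctangle and S :: "nat set"
  defines "A \<equiv> tdiag_of T" and "B \<equiv> tdiag_of R"
  defines "SA \<equiv> S \<inter> {..<ncr A}" and "SB \<equiv> {j. j + ncr A \<in> S}"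
  assumes gA: "good A SA" and gB: "good B SB"
  shows "good (tdiag_of (TSum T R)) S \<and> (p0 (tdiag_of (TSum T R)) S \<longleftrightarrow> p0 A SA \<and> p0 B SB) \<and>
     cnt (tdiag_of (TSum T R)) S + (if \<not> p0 A SA \<and> \<not> p0 B SB then 1 else 2) = cnt A SA + cnt B SB"
proof -
  let ?f = "shift_slot (ncr A)"
  have wA: "wfd A" and wB: "wfd B" unfolding A_def B_def by (rule wfd_tdiag)+
  have RS: "RS (tdiag_of (TSum T R)) S = insert (bse A, ?f (bsw B)) (insert (bne A, ?f (bnw B))
      (RS A SA \<union> map_prod ?f ?f ` RS B SB))"
    unfolding A_def B_def SA_def SB_def by (rule RS_TSum)
  have D: "bnw (tdiag_of (TSum T R)) = bnw A" "bne (tdiag_of (TSum T R)) = ?f (bne B)"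
    "bsw (tdiag_of (TSum T R)) = bsw A" "bse (tdiag_of (TSum T R)) = ?f (bse B)"
    "ncr (tdiag_of (TSum T R)) = ncr A + ncr B"
    unfolding A_def B_def by (simp_all add: Let_def)
  have V: "VV (ncr (tdiag_of (TSum T R))) = VV (ncr A) \<union> ?f ` VV (ncr B)"
    unfolding D(5) by (rule VV_add)
  note g = glue_T[OF RS_sub[OF wA] RS_sub[OF wB] VV_disj inj_shift finite_VV finite_VV,
      of "bnw A" "bne A" "bsw A" "bse A" "bnw B" "bne B" "bsw B" "bse B"]
  have pts: "bnw A \<in> VV (ncr A)" "bne A \<in> VV (ncr A)" "bsw A \<in> VV (ncr A)" "bse A \<in> VV (ncr A)"
    "bnw B \<in> VV (ncr B)" "bne B \<in> VV (ncr B)" "bsw B \<in> VV (ncr B)" "bse B \<in> VV (ncr B)"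
    using wA wB unfolding wfd_def by auto
  from g[OF pts gA[unfolded good_def] gB[unfolded good_def]] show ?thesis
    unfolding good_def p0_def cnt_def RS D(1-4) V by simp
qed

lemma vsum_state:
  fixes T R :: ctangle and S :: "nat set"
  defines "A \<equiv> tdiag_of T" and "B \<equiv> tdiag_of R"
  defines "SA \<equiv> S \<inter> {..<ncr A}" and "SB \<equiv> {j. j + ncr A \<in> S}"
  assumes gA: "good A SA" and gB: "good B SB"
  shows "good (tdiag_of (VSum T R)) S \<and> (p0 (tdiag_of (VSum T R)) S \<longleftrightarrow> p0 A SA \<or> p0 B SB) \<and>
     cnt (tdiag_of (VSum T R)) S + (if p0 A SA \<and> p0 B SB then 1 else 2) = cnt A SA + cnt B SB"
proof -
  let ?f = "shift_slot (ncr A)"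
  have wA: "wfd A" and wB: "wfd B" unfolding A_def B_def by (rule wfd_tdiag)+
  have RS: "RS (tdiag_of (VSum T R)) S = insert (bse A, ?f (bne B)) (insert (bsw A, ?f (bnw B))
      (RS A SA \<union> map_prod ?f ?f ` RS B SB))"
    unfolding A_def B_def SA_def SB_def by (rule RS_VSum)
  have D: "bnw (tdiag_of (VSum T R)) = bnw A" "bne (tdiag_of (VSum T R)) = bne A"
    "bsw (tdiag_of (VSum T R)) = ?f (bsw B)" "bse (tdiag_of (VSum T R)) = ?f (bse B)"
    "ncr (tdiag_of (VSum T R)) = ncr A + ncr B"
    unfolding A_def B_def by (simp_all add: Let_def)
  have V: "VV (ncr (tdiag_of (VSum T R))) = VV (ncr A) \<union> ?f ` VV (ncr B)"
    unfolding D(5) by (rule VV_add)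
  note g = glue_V[OF RS_sub[OF wA] RS_sub[OF wB] VV_disj inj_shift finite_VV finite_VV,
      of "bnw A" "bne A" "bsw A" "bse A" "bnw B" "bne B" "bsw B" "bse B"]
  have pts: "bnw A \<in> VV (ncr A)" "bne A \<in> VV (ncr A)" "bsw A \<in> VV (ncr A)" "bse A \<in> VV (ncr A)"
    "bnw B \<in> VV (ncr B)" "bne B \<in> VV (ncr B)" "bsw B \<in> VV (ncr B)" "bse B \<in> VV (ncr B)"
    using wA wB unfolding wfd_def by auto
  from g[OF pts gA[unfolded good_def] gB[unfolded good_def]] show ?thesis
    unfolding good_def p0_def cnt_def RS D(1-4) V by simp
qed

lemma good_all: "good (tdiag_of T) S"
proof (induction T arbitrary: S)
  case One then show ?case using one_state by blast
next
  case (TSum T R) then show ?case using tsum_state by blast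
next
  case (VSum T R) then show ?case using vsum_state by blast
qed

lemma cnt_ge2: "cnt (tdiag_of T) S \<ge> 2"
proof -
  let ?D = "tdiag_of T"
  have w: "wfd ?D" by (rule wfd_tdiag)
  have g: "good ?D S" by (rule good_all)
  show ?thesis
  proof (cases "p0 ?D S")
    case True
    then have "(bnw ?D, bsw ?D) \<notin> cn (RS ?D S)" using g unfolding good_def goodr_def p0_def by blast
    then show ?thesis unfolding cnt_def using w unfolding wfd_def by (intro ncomp_ge2) auto
  next
    case False
    then have "(bnw ?D, bne ?D) \<notin> cn (RS ?D S)" unfolding p0_def by blast
    then show ?thesis unfolding cnt_def using w unfolding wfd_def by (intro ncomp_ge2) auto
  qed
qed


definition dl :: "int fls" where "dl = - (fls_X + fls_X_inv)"

definition wt :: "tdiag \<Rightarrow> nat set \<Rightarrow> int fls" where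
  "wt D S = fls_X_intpow (- int (card S)) * dl ^ (cnt D S - 2)"

definition tA :: "tdiag \<Rightarrow> nat set \<Rightarrow> int fls" where
  "tA D S = (if p0 D S then wt D S else 0)"

definition uA :: "tdiag \<Rightarrow> nat set \<Rightarrow> int fls" where
  "uA D S = (if p0 D S then 0 else wt D S)"

definition AA :: "ctangle \<Rightarrow> int fls" where
  "AA T = (\<Sum>S\<in>Pow {..<ncr (tdiag_of T)}. tA (tdiag_of T) S)"

definition BB :: "ctangle \<Rightarrow> int fls" where
  "BB T = (\<Sum>S\<in>Pow {..<ncr (tdiag_of T)}. uA (tdiag_of T) S)"

lemma split_props:
  assumes "SA \<subseteq> {..<k}" "SB \<subseteq> {..<n::nat}"
  shows "(SA \<union> (\<lambda>j. j + k) ` SB) \<inter> {..<k} = SA"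
    and "{j. j + k \<in> SA \<union> (\<lambda>j. j + k) ` SB} = SB"
    and "card (SA \<union> (\<lambda>j. j + k) ` SB) = card SA + card SB"
proof -
  show "(SA \<union> (\<lambda>j. j + k) ` SB) \<inter> {..<k} = SA" using assms(1) by auto
  show "{j. j + k \<in> SA \<union> (\<lambda>j. j + k) ` SB} = SB" using assms(1) by auto
  have fin: "finite SA" "finite SB" using assms finite_subset by blast+
  have "SA \<inter> (\<lambda>j. j + k) ` SB = {}" using assms(1) by auto
  then have "card (SA \<union> (\<lambda>j. j + k) ` SB) = card SA + card ((\<lambda>j. j + k) ` SB)"
    using fin by (simp add: card_Un_disjoint)
  also have "card ((\<lambda>j. j + k) ` SB) = card SB" by (simp add: card_image inj_on_def)
  finally show "card (SA \<union> (\<lambda>j. j + k) ` SB) = card SA + card SB" .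
qed

lemma sum_pow_split:
  "(\<Sum>S\<in>Pow {..<k + n}. F S) = (\<Sum>SA\<in>Pow {..<k}. \<Sum>SB\<in>Pow {..<n::nat}. F (SA \<union> (\<lambda>j. j + k) ` SB))"
proof -
  let ?g = "\<lambda>(SA, SB). SA \<union> (\<lambda>j. j + k) ` SB"
  let ?h = "\<lambda>S. (S \<inter> {..<k}, {j. j + k \<in> S})"
  have bij: "bij_betw ?g (Pow {..<k} \<times> Pow {..<n}) (Pow {..<k + n})"
  proof (rule bij_betw_byWitness[where f' = ?h])
    show "\<forall>a\<in>Pow {..<k} \<times> Pow {..<n}. ?h (?g a) = a"
      using split_props(1,2) by auto
    show "\<forall>a'\<in>Pow {..<k + n}. ?g (?h a') = a'"
    proof
      fix S assume "S \<in> Pow {..<k + n}"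
      have "S \<inter> {..<k} \<union> (\<lambda>j. j + k) ` {j. j + k \<in> S} = S"
      proof
        show "S \<subseteq> S \<inter> {..<k} \<union> (\<lambda>j. j + k) ` {j. j + k \<in> S}"
        proof
          fix i assume "i \<in> S"
          show "i \<in> S \<inter> {..<k} \<union> (\<lambda>j. j + k) ` {j. j + k \<in> S}"
          proof (cases "i < k")
            case True then show ?thesis using \<open>i \<in> S\<close> by simp
          next
            case False
            then have "i = (i - k) + k" by simp
            then show ?thesis using \<open>i \<in> S\<close> by (intro UnI2 rev_image_eqI[of "i - k"]) auto
          qed
        qed
      qed auto
      then show "?g (?h S) = S" by simp
    qed
    show "?g ` (Pow {..<k} \<times> Pow {..<n}) \<subseteq> Pow {..<k + n}" by auto
    show "?h ` Pow {..<k + n} \<subseteq> Pow {..<k} \<times> Pow {..<n}" by auto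
  qed
  have "(\<Sum>S\<in>Pow {..<k + n}. F S) = (\<Sum>p\<in>Pow {..<k} \<times> Pow {..<n}. F (?g p))"
    using sum.reindex_bij_betw[OF bij, of F] by simp
  also have "\<dots> = (\<Sum>SA\<in>Pow {..<k}. \<Sum>SB\<in>Pow {..<n}. F (SA \<union> (\<lambda>j. j + k) ` SB))"
    by (simp add: sum.cartesian_product split_def)
  finally show ?thesis .
qed

lemma Xpow_add: "fls_X_intpow (- int (a + b)) = (fls_X_intpow (- int a) :: int fls) * fls_X_intpow (- int b)"
  using fls_X_intpow_times_fls_X_intpow[of "- int a" "- int b", where 'a=int] by simp

lemma tsum_point:
  fixes T R :: ctangle
  defines "A \<equiv> tdiag_of T" and "B \<equiv> tdiag_of R"
  assumes SA: "SA \<subseteq> {..<ncr A}" and SB: "SB \<subseteq> {..<ncr B}"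
  defines "S \<equiv> SA \<union> (\<lambda>j. j + ncr A) ` SB"
  shows "tA (tdiag_of (TSum T R)) S = tA A SA * tA B SB"
    and "uA (tdiag_of (TSum T R)) S = tA A SA * uA B SB + uA A SA * tA B SB + dl * (uA A SA * uA B SB)"
proof -
  note sp = split_props[OF SA SB, folded S_def]
  have st: "good (tdiag_of (TSum T R)) S \<and> (p0 (tdiag_of (TSum T R)) S \<longleftrightarrow> p0 A SA \<and> p0 B SB) \<and>
     cnt (tdiag_of (TSum T R)) S + (if \<not> p0 A SA \<and> \<not> p0 B SB then 1 else 2) = cnt A SA + cnt B SB"
    using tsum_state[OF good_all good_all, of T R S] unfolding A_def B_def sp(1,2)[unfolded A_def B_def] .
  have c2: "cnt A SA \<ge> 2" "cnt B SB \<ge> 2" unfolding A_def B_def by (rule cnt_ge2)+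
  have X: "fls_X_intpow (- int (card S)) = (fls_X_intpow (- int (card SA)) :: int fls) * fls_X_intpow (- int (card SB))"
    unfolding sp(3) by (rule Xpow_add)
  let ?D = "tdiag_of (TSum T R)"
  have w1: "wt ?D S = wt A SA * wt B SB" if "cnt ?D S - 2 = (cnt A SA - 2) + (cnt B SB - 2)"
    unfolding wt_def X that power_add by (simp only: mult_ac)
  have w2: "wt ?D S = dl * (wt A SA * wt B SB)" if "cnt ?D S - 2 = Suc ((cnt A SA - 2) + (cnt B SB - 2))"
    unfolding wt_def X that power_add power_Suc by (simp only: mult_ac)
  show "tA ?D S = tA A SA * tA B SB"
  proof (cases "p0 A SA \<and> p0 B SB")
    case True
    then have e: "cnt ?D S - 2 = (cnt A SA - 2) + (cnt B SB - 2)" using st c2 by auto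
    show ?thesis using True st unfolding tA_def uA_def using w1[OF e] by simp
  next
    case False
    then show ?thesis using st unfolding tA_def by auto
  qed
  show "uA ?D S = tA A SA * uA B SB + uA A SA * tA B SB + dl * (uA A SA * uA B SB)"
  proof (cases "p0 A SA")
    case pA: True
    show ?thesis
    proof (cases "p0 B SB")
      case True then show ?thesis using pA st unfolding uA_def tA_def by auto
    next
      case False
      then have e: "cnt ?D S - 2 = (cnt A SA - 2) + (cnt B SB - 2)" using pA st c2 by auto
      show ?thesis using pA False st unfolding tA_def uA_def using w1[OF e] by simp
    qed
  next
    case pA: False
    show ?thesis
    proof (cases "p0 B SB")
      case True
      then have e: "cnt ?D S - 2 = (cnt A SA - 2) + (cnt B SB - 2)" using pA st c2 by auto
      show ?thesis using pA True st unfolding tA_def uA_def using w1[OF e] by simp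
    next
      case False
      then have e: "cnt ?D S - 2 = Suc ((cnt A SA - 2) + (cnt B SB - 2))" using pA st c2 by auto
      show ?thesis using pA False st unfolding tA_def uA_def using w2[OF e] by simp
    qed
  qed
qed

lemma vsum_point:
  fixes T R :: ctangle
  defines "A \<equiv> tdiag_of T" and "B \<equiv> tdiag_of R"
  assumes SA: "SA \<subseteq> {..<ncr A}" and SB: "SB \<subseteq> {..<ncr B}"
  defines "S \<equiv> SA \<union> (\<lambda>j. j + ncr A) ` SB"
  shows "uA (tdiag_of (VSum T R)) S = uA A SA * uA B SB"
    and "tA (tdiag_of (VSum T R)) S = tA A SA * uA B SB + uA A SA * tA B SB + dl * (tA A SA * tA B SB)"
proof -
  note sp = split_props[OF SA SB, folded S_def]
  have st: "good (tdiag_of (VSum T R)) S \<and> (p0 (tdiag_of (VSum T R)) S \<longleftrightarrow> p0 A SA \<or> p0 B SB) \<and>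
     cnt (tdiag_of (VSum T R)) S + (if p0 A SA \<and> p0 B SB then 1 else 2) = cnt A SA + cnt B SB"
    using vsum_state[OF good_all good_all, of T R S] unfolding A_def B_def sp(1,2)[unfolded A_def B_def] .
  have c2: "cnt A SA \<ge> 2" "cnt B SB \<ge> 2" unfolding A_def B_def by (rule cnt_ge2)+
  have X: "fls_X_intpow (- int (card S)) = (fls_X_intpow (- int (card SA)) :: int fls) * fls_X_intpow (- int (card SB))"
    unfolding sp(3) by (rule Xpow_add)
  let ?D = "tdiag_of (VSum T R)"
  have w1: "wt ?D S = wt A SA * wt B SB" if "cnt ?D S - 2 = (cnt A SA - 2) + (cnt B SB - 2)"
    unfolding wt_def X that power_add by (simp only: mult_ac)
  have w2: "wt ?D S = dl * (wt A SA * wt B SB)" if "cnt ?D S - 2 = Suc ((cnt A SA - 2) + (cnt B SB - 2))"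
    unfolding wt_def X that power_add power_Suc by (simp only: mult_ac)
  show "uA ?D S = uA A SA * uA B SB"
  proof (cases "p0 A SA \<or> p0 B SB")
    case False
    then have e: "cnt ?D S - 2 = (cnt A SA - 2) + (cnt B SB - 2)" using st c2 by auto
    show ?thesis using False st unfolding tA_def uA_def using w1[OF e] by simp
  next
    case True
    then show ?thesis using st unfolding uA_def by auto
  qed
  show "tA ?D S = tA A SA * uA B SB + uA A SA * tA B SB + dl * (tA A SA * tA B SB)"
  proof (cases "p0 A SA")
    case pA: True
    show ?thesis
    proof (cases "p0 B SB")
      case True
      then have e: "cnt ?D S - 2 = Suc ((cnt A SA - 2) + (cnt B SB - 2))" using pA st c2 by auto
      show ?thesis using pA True st unfolding tA_def uA_def using w2[OF e] by simp
    next
      case False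
      then have e: "cnt ?D S - 2 = (cnt A SA - 2) + (cnt B SB - 2)" using pA st c2 by auto
      show ?thesis using pA False st unfolding tA_def uA_def using w1[OF e] by simp
    qed
  next
    case pA: False
    show ?thesis
    proof (cases "p0 B SB")
      case True
      then have e: "cnt ?D S - 2 = (cnt A SA - 2) + (cnt B SB - 2)" using pA st c2 by auto
      show ?thesis using pA True st unfolding tA_def uA_def using w1[OF e] by simp
    next
      case False then show ?thesis using pA st unfolding uA_def tA_def by auto
    qed
  qed
qed


lemma ncr_TSum: "ncr (tdiag_of (TSum T R)) = ncr (tdiag_of T) + ncr (tdiag_of R)"
  by (simp add: Let_def)
lemma ncr_VSum: "ncr (tdiag_of (VSum T R)) = ncr (tdiag_of T) + ncr (tdiag_of R)"
  by (simp add: Let_def)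

lemma AA_TSum: "AA (TSum T R) = AA T * AA R"
proof -
  have "AA (TSum T R) = (\<Sum>SA\<in>Pow {..<ncr (tdiag_of T)}. \<Sum>SB\<in>Pow {..<ncr (tdiag_of R)}.
      tA (tdiag_of T) SA * tA (tdiag_of R) SB)"
    unfolding AA_def ncr_TSum sum_pow_split
    by (intro sum.cong refl) (simp del: tdiag_of.simps add: tsum_point)
  also have "\<dots> = AA T * AA R" unfolding AA_def by (simp del: tdiag_of.simps add: sum_product)
  finally show ?thesis .
qed

lemma BB_TSum: "BB (TSum T R) = AA T * BB R + BB T * AA R + dl * (BB T * BB R)"
proof -
  have "BB (TSum T R) = (\<Sum>SA\<in>Pow {..<ncr (tdiag_of T)}. \<Sum>SB\<in>Pow {..<ncr (tdiag_of R)}.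
      tA (tdiag_of T) SA * uA (tdiag_of R) SB + uA (tdiag_of T) SA * tA (tdiag_of R) SB
      + dl * (uA (tdiag_of T) SA * uA (tdiag_of R) SB))"
    unfolding BB_def ncr_TSum sum_pow_split
    by (intro sum.cong refl) (simp del: tdiag_of.simps add: tsum_point)
  also have "\<dots> = AA T * BB R + BB T * AA R + dl * (BB T * BB R)" (is "_ = ?rhs")
    unfolding AA_def BB_def sum_product by (simp only: sum.distrib sum_distrib_left)
  finally show ?thesis .
qed

lemma BB_VSum: "BB (VSum T R) = BB T * BB R"
proof -
  have "BB (VSum T R) = (\<Sum>SA\<in>Pow {..<ncr (tdiag_of T)}. \<Sum>SB\<in>Pow {..<ncr (tdiag_of R)}.
      uA (tdiag_of T) SA * uA (tdiag_of R) SB)"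
    unfolding BB_def ncr_VSum sum_pow_split
    by (intro sum.cong refl) (simp del: tdiag_of.simps add: vsum_point)
  also have "\<dots> = BB T * BB R" unfolding BB_def by (simp del: tdiag_of.simps add: sum_product)
  finally show ?thesis .
qed

lemma AA_VSum: "AA (VSum T R) = AA T * BB R + BB T * AA R + dl * (AA T * AA R)"
proof -
  have "AA (VSum T R) = (\<Sum>SA\<in>Pow {..<ncr (tdiag_of T)}. \<Sum>SB\<in>Pow {..<ncr (tdiag_of R)}.
      tA (tdiag_of T) SA * uA (tdiag_of R) SB + uA (tdiag_of T) SA * tA (tdiag_of R) SB
      + dl * (tA (tdiag_of T) SA * tA (tdiag_of R) SB))"
    unfolding AA_def ncr_VSum sum_pow_split
    by (intro sum.cong refl) (simp del: tdiag_of.simps add: vsum_point)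
  also have "\<dots> = AA T * BB R + BB T * AA R + dl * (AA T * AA R)"
    unfolding AA_def BB_def sum_product by (simp only: sum.distrib sum_distrib_left)
  finally show ?thesis .
qed

lemma Pow_lessThan_1: "Pow {..<Suc 0} = {{}, {0}}"
  by (auto simp: lessThan_Suc Pow_insert)

lemma AA_One: "AA One = fls_X_intpow (-1)"
proof -
  have "tA (tdiag_of One) {} = 0" "tA (tdiag_of One) {0} = fls_X_intpow (-1)"
    using one_state[of "{}"] one_state[of "{0}"] unfolding tA_def wt_def by auto
  then show ?thesis unfolding AA_def by (simp add: Pow_lessThan_1)
qed

lemma BB_One: "BB One = 1"
proof -
  have "uA (tdiag_of One) {} = 1" "uA (tdiag_of One) {0} = 0"
    using one_state[of "{}"] one_state[of "{0}"] unfolding uA_def wt_def by auto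
  then show ?thesis unfolding BB_def by (simp add: Pow_lessThan_1)
qed

lemma quotient_img: "A // r = (\<lambda>x. r `` {x}) ` A"
  unfolding quotient_def by auto

lemma quotient_ncomp: "A // cn E = (\<lambda>x. cn E `` {x}) ` A"
  unfolding quotient_def by auto

lemma num_loops_eq:
  "num_loops (numerator T) S =
     (if p0 (tdiag_of T) S then cnt (tdiag_of T) S else cnt (tdiag_of T) S - 1)"
proof -
  let ?D = "tdiag_of T"
  have w: "wfd ?D" by (rule wfd_tdiag)
  have g: "good ?D S" by (rule good_all)
  have R: "snd (numerator T) \<union> (\<Union>i<fst (numerator T). smoothing S i)
     = insert (bsw ?D, bse ?D) (insert (bnw ?D, bne ?D) (RS ?D S))"
    unfolding numerator_def RS_def by (auto simp: Let_def)
  have nl: "num_loops (numerator T) S = ncomp (VV (ncr ?D)) (insert (bsw ?D, bse ?D) (insert (bnw ?D, bne ?D) (RS ?D S)))"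
    unfolding num_loops_def Let_def R
    by (simp add: numerator_def Let_def ncomp_def VV_def quotient_img cn_def)
  show ?thesis
  proof (cases "p0 ?D S")
    case True
    then have 1: "(bnw ?D, bne ?D) \<in> cn (RS ?D S)" unfolding p0_def .
    have 2: "(bsw ?D, bse ?D) \<in> cn (insert (bnw ?D, bne ?D) (RS ?D S))"
      using g True unfolding good_def goodr_def p0_def cn_insert by blast
    show ?thesis unfolding nl using True
      by (simp add: ncomp_insert_same[OF 2] ncomp_insert_same[OF 1] cnt_def)
  next
    case False
    then have 1: "(bnw ?D, bne ?D) \<notin> cn (RS ?D S)" unfolding p0_def .
    have 2: "(bsw ?D, bse ?D) \<in> cn (insert (bnw ?D, bne ?D) (RS ?D S))"
    proof -
      have h: "(bnw ?D, bsw ?D) \<in> cn (RS ?D S)" "(bne ?D, bse ?D) \<in> cn (RS ?D S)"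
        using g False unfolding good_def goodr_def p0_def by blast+
      show ?thesis unfolding cn_insert using cn_sym[OF h(1)] h(2) by blast
    qed
    have 3: "ncomp (VV (ncr ?D)) (insert (bnw ?D, bne ?D) (RS ?D S)) + 1 = cnt ?D S"
      unfolding cnt_def by (rule ncomp_insert_diff) (use w 1 in \<open>auto simp: wfd_def\<close>)
    show ?thesis unfolding nl using False 3
      by (simp add: ncomp_insert_same[OF 2])
  qed
qed

lemma nsum_eq:
  "(\<Sum>S\<in>Pow {..<ncr (tdiag_of T)}. fls_X_intpow (- int (card S)) * dl ^ (num_loops (numerator T) S - 1))
     = dl * AA T + BB T"
proof -
  have "fls_X_intpow (- int (card S)) * dl ^ (num_loops (numerator T) S - 1)
      = dl * tA (tdiag_of T) S + uA (tdiag_of T) S" for S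
  proof -
    have c2: "cnt (tdiag_of T) S \<ge> 2" by (rule cnt_ge2)
    show ?thesis
    proof (cases "p0 (tdiag_of T) S")
      case True
      have e: "cnt (tdiag_of T) S - 1 = Suc (cnt (tdiag_of T) S - 2)" using c2 by simp
      show ?thesis unfolding num_loops_eq tA_def uA_def wt_def using True
        by (simp only: if_True if_False e power_Suc mult_ac add_0_right)
    next
      case False
      have e: "cnt (tdiag_of T) S - 1 - 1 = cnt (tdiag_of T) S - 2" by simp
      show ?thesis unfolding num_loops_eq tA_def uA_def wt_def using False
        by (simp only: if_True if_False e mult_zero_right add_0_left)
    qed
  qed
  then show ?thesis unfolding AA_def BB_def by (simp add: sum.distrib sum_distrib_left)
qed

lemma jones_num:
  "\<exists>\<epsilon>\<in>{1, -1}. \<exists>c. jones (numerator T) ori = \<epsilon> * fls_X_intpow c * (dl * AA T + BB T)"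
proof -
  let ?w = "writhe (numerator T) ori"
  let ?c = "(3 * ?w + int (fst (numerator T))) div 2"
  have f: "fst (numerator T) = ncr (tdiag_of T)" by (simp add: numerator_def Let_def)
  have "jones (numerator T) ori = (if even ?w then 1 else -1) *
     (\<Sum>S\<in>Pow {..<ncr (tdiag_of T)}. fls_X_intpow ?c * (fls_X_intpow (- int (card S)) * dl ^ (num_loops (numerator T) S - 1)))"
    unfolding jones_def Let_def f dl_def fls_X_intpow_diff_conv_times by (simp add: mult.assoc)
  also have "\<dots> = (if even ?w then 1 else -1) * fls_X_intpow ?c * (dl * AA T + BB T)"
    unfolding sum_distrib_left[symmetric] nsum_eq by (simp add: mult.assoc)
  finally show ?thesis by (intro bexI[of _ "if even ?w then 1 else -1"] exI[of _ ?c]) auto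
qed


notation fls_nth (infixl "$$" 75)

lemma lp_iff: "laurent_poly f \<longleftrightarrow> (\<exists>M. \<forall>n>M. f $$ n = 0)"
proof
  assume "laurent_poly f"
  then have fin: "finite (insert 0 {i. f $$ i \<noteq> 0})" unfolding laurent_poly_def by simp
  have "\<forall>n>Max (insert 0 {i. f $$ i \<noteq> 0}). f $$ n = 0"
  proof (intro allI impI)
    fix n assume n: "n > Max (insert 0 {i. f $$ i \<noteq> 0})"
    show "f $$ n = 0"
    proof (rule ccontr)
      assume "f $$ n \<noteq> 0"
      then have "n \<le> Max (insert 0 {i. f $$ i \<noteq> 0})" using fin by (intro Max_ge) auto
      then show False using n by simp
    qed
  qed
  then show "\<exists>M. \<forall>n>M. f $$ n = 0" by blast
next
  assume "\<exists>M. \<forall>n>M. f $$ n = 0"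
  then obtain M where M: "\<forall>n>M. f $$ n = 0" by blast
  have "{i. f $$ i \<noteq> 0} \<subseteq> {fls_subdegree f..M}"
  proof
    fix i assume "i \<in> {i. f $$ i \<noteq> 0}"
    then have "f $$ i \<noteq> 0" by simp
    then have "\<not> i < fls_subdegree f" "\<not> i > M" using M fls_eq0_below_subdegree by auto
    then show "i \<in> {fls_subdegree f..M}" by simp
  qed
  then show "laurent_poly f" unfolding laurent_poly_def by (rule finite_subset) simp
qed

lemma lp_shift1: "laurent_poly (fls_shift c (1 :: int fls))"
  unfolding lp_iff by (rule exI[of _ "- c"]) auto

lemma lp_0: "laurent_poly (0 :: int fls)"
  by (simp add: laurent_poly_def)

lemma lp_1: "laurent_poly (1 :: int fls)"
  using lp_shift1[of 0] by simp

lemma lp_X: "laurent_poly (fls_X :: int fls)"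
  unfolding lp_iff by (rule exI[of _ 1]) auto

lemma lp_Xinv: "laurent_poly (fls_X_inv :: int fls)"
  unfolding lp_iff by (rule exI[of _ 0]) auto

lemma lp_add: "laurent_poly f \<Longrightarrow> laurent_poly g \<Longrightarrow> laurent_poly (f + g)"
proof -
  assume "laurent_poly f" "laurent_poly g"
  then obtain M N where "\<forall>n>M. f $$ n = 0" "\<forall>n>N. g $$ n = 0" unfolding lp_iff by blast
  then have "\<forall>n>max M N. (f + g) $$ n = 0" by simp
  then show ?thesis unfolding lp_iff by blast
qed

lemma lp_uminus: "laurent_poly f \<Longrightarrow> laurent_poly (- f)"
  unfolding laurent_poly_def by simp

lemma lp_diff: "laurent_poly f \<Longrightarrow> laurent_poly g \<Longrightarrow> laurent_poly (f - g)"
  using lp_add[of f "- g"] lp_uminus[of g] by simp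

lemma lp_mult:
  fixes f g :: "int fls"
  shows "laurent_poly f \<Longrightarrow> laurent_poly g \<Longrightarrow> laurent_poly (f * g)"
proof -
  assume "laurent_poly f" "laurent_poly g"
  then obtain M N where M: "\<forall>n>M. f $$ n = 0" and N: "\<forall>n>N. g $$ n = 0" unfolding lp_iff by blast
  have "(f * g) $$ n = 0" if n: "n > M + N" for n
  proof -
    have "(f * g) $$ n = (\<Sum>i=fls_subdegree f..n - fls_subdegree g. f $$ i * g $$ (n - i))"
      by (rule fls_times_nth(2))
    also have "\<dots> = 0"
    proof (rule sum.neutral, intro ballI)
      fix i
      show "f $$ i * g $$ (n - i) = 0"
      proof (cases "i > M")
        case True then show ?thesis using M by simp
      next
        case False then have "n - i > N" using n by simp
        then show ?thesis using N by simp
      qed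
    qed
    finally show ?thesis .
  qed
  then show ?thesis unfolding lp_iff by blast
qed

lemma lp_power:
  fixes f :: "int fls"
  shows "laurent_poly f \<Longrightarrow> laurent_poly (f ^ n)"
  by (induction n) (simp_all add: lp_1 lp_mult)

lemma lp_sum:
  fixes F :: "'b \<Rightarrow> int fls"
  shows "(\<And>x. x \<in> A \<Longrightarrow> laurent_poly (F x)) \<Longrightarrow> laurent_poly (sum F A)"
proof (induction A rule: infinite_finite_induct)
  case (infinite A) then show ?case using lp_shift1[of 0] by (simp add: laurent_poly_def)
next
  case empty then show ?case by (simp add: laurent_poly_def)
next
  case (insert x F) then show ?case by (simp add: lp_add)
qed

lemma lp_dl: "laurent_poly dl"
  unfolding dl_def by (intro lp_uminus lp_add lp_X lp_Xinv)

lemma lp_BB: "laurent_poly (BB T)"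
  unfolding BB_def uA_def wt_def
  by (intro lp_sum) (auto intro!: lp_mult lp_power lp_dl lp_shift1 lp_0)

lemma XY: "(fls_X :: int fls) * fls_X_inv = 1"
proof -
  have "(fls_X :: int fls) * fls_X_inv = fls_X_intpow 1 * fls_X_intpow (-1)"
    by (simp add: fls_X_conv_shift_1 fls_X_inv_conv_shift_1)
  also have "\<dots> = 1" by (simp only: fls_X_intpow_times_fls_X_intpow) simp
  finally show ?thesis .
qed

abbreviation "xx \<equiv> (fls_X :: int fls)"
abbreviation "yy \<equiv> (fls_X_inv :: int fls)"

definition aQ :: "int fls" where "aQ = yy * 1 + 1 * yy + dl * (yy * yy)"
definition aP :: "int fls" where
  "aP = aQ * (yy * 1 + 1 * yy + dl * (1 * 1)) + (1 * 1) * (yy * yy) + dl * (aQ * (yy * yy))"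
definition bP :: "int fls" where "bP = (1 * 1) * (yy * 1 + 1 * yy + dl * (1 * 1))"
definition ph :: "int fls" where "ph = (xx^2)^4 - (xx^2)^3 + (xx^2)^2 - xx^2 + 1"

lemma ph_phi10: "phi10 = ph"
  unfolding phi10_def ph_def tvar_def ..

lemma ids:
  shows "dl * aP + bP = - (yy^7 * (1 + (xx^2)^2))"
    and "aP + dl * bP = yy^6 * ph"
    and "aP = yy^2 * (1 - (xx^2)^2) + yy^6 * ph"
    and "aQ = - (yy^3 * (1 - xx^2))"
  using XY unfolding dl_def aP_def bP_def aQ_def ph_def
  by algebra+

lemma id5: "(1 + (xx^2)^2) * (1 - xx^2) = ph - (xx^2)^4"
  unfolding ph_def by (simp add: algebra_simps)

lemma AA_One': "AA One = yy"
  using AA_One by (simp add: fls_X_inv_conv_shift_1)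

lemma vals: "AA rat_1_2 = aQ" "BB rat_1_2 = 1 * 1" "AA rat_2_5 = aP" "BB rat_2_5 = bP"
  unfolding rat_1_2_def rat_2_5_def aQ_def aP_def bP_def
  by (simp_all only: AA_VSum BB_VSum AA_TSum BB_TSum AA_One' BB_One)

lemma AA_tsum: "Ts \<noteq> [] \<Longrightarrow> AA (tsum_list Ts) = prod_list (map AA Ts)"
proof (induction Ts)
  case Nil then show ?case by simp
next
  case (Cons T Ts)
  show ?case
  proof (cases Ts)
    case Nil then show ?thesis by simp
  next
    case (Cons T' Ts')
    then have "tsum_list (T # Ts) = TSum T (tsum_list Ts)" by simp
    then show ?thesis using Cons.IH Cons by (simp add: AA_TSum)
  qed
qed

lemma key:
  assumes "k \<ge> 1"
  shows "\<exists>B. laurent_poly B \<and>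
    dl * AA (tsum_list (replicate k rat_2_5 @ replicate m rat_1_2)) + BB (tsum_list (replicate k rat_2_5 @ replicate m rat_1_2))
      = (dl * aP + bP) * aP ^ (k - 1) * aQ ^ m + (aP + dl * bP) * B"
proof -
  define rest where "rest = replicate (k - 1) rat_2_5 @ replicate m rat_1_2"
  have L: "replicate k rat_2_5 @ replicate m rat_1_2 = rat_2_5 # rest"
    unfolding rest_def using assms by (cases k) auto
  show ?thesis
  proof (cases rest)
    case Nil
    then have "k - 1 = 0" "m = 0" unfolding rest_def by auto
    then show ?thesis unfolding L using Nil
      by (intro exI[of _ 0]) (simp add: vals lp_0)
  next
    case (Cons r rs)
    then have t: "tsum_list (rat_2_5 # rest) = TSum rat_2_5 (tsum_list rest)" by simp
    have A: "AA (tsum_list rest) = aP ^ (k - 1) * aQ ^ m"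
    proof -
      have "rest \<noteq> []" using Cons by simp
      then have "AA (tsum_list rest) = prod_list (map AA rest)" by (rule AA_tsum)
      then show ?thesis unfolding rest_def by (simp add: vals)
    qed
    show ?thesis unfolding L t AA_TSum BB_TSum vals A
      by (intro exI[of _ "BB (tsum_list rest)"]) (simp add: lp_BB algebra_simps)
  qed
qed

lemma binom_split:
  assumes "laurent_poly u" "laurent_poly (v :: int fls)"
  shows "\<exists>q. laurent_poly q \<and> (u + v) ^ n = u ^ n + v * q"
proof (induction n)
  case 0 then show ?case by (intro exI[of _ 0]) (simp add: lp_0)
next
  case (Suc n)
  then obtain q where q: "laurent_poly q" "(u + v) ^ n = u ^ n + v * q" by blast
  have "(u + v) ^ Suc n = u ^ Suc n + v * (u ^ n + u * q + v * q)"
    unfolding power_Suc q(2) by (simp add: algebra_simps)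
  moreover have "laurent_poly (u ^ n + u * q + v * q)"
    using assms q(1) by (intro lp_add lp_mult lp_power)
  ultimately show ?case by blast
qed


lemma minus_one_pow: "(-1 :: int fls) ^ m = 1 \<or> (-1 :: int fls) ^ m = -1"
  by (induction m) auto

lemma lp_pm1: "e \<in> {1, -1} \<Longrightarrow> laurent_poly (e :: int fls)"
  using lp_1 lp_uminus[OF lp_1] by auto

lemma Xpow_nat_neg: "fls_X_intpow (- int J) = yy ^ J"
  by (simp add: fls_X_inv_power_conv_shift_1)

lemma main_i:
  assumes k: "k \<ge> 1"
  shows "\<exists>\<epsilon>\<in>{1, -1}. \<exists>i h. laurent_poly h \<and>
    jones (montesinos_2_5_1_2 k m) ori - \<epsilon> * fls_X_intpow i *
      ((1 + tvar ^ 2) * (1 - tvar ^ 2) ^ (k - 1) * (1 - tvar) ^ m) = h * phi10"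
proof -
  define T where "T = tsum_list (replicate k rat_2_5 @ replicate m rat_1_2)"
  obtain \<epsilon>0 c where e0: "\<epsilon>0 \<in> {1, -1}" and J0: "jones (numerator T) ori = \<epsilon>0 * fls_X_intpow c * (dl * AA T + BB T)"
    using jones_num[of T ori] by blast
  obtain B where B: "laurent_poly B" and NB: "dl * AA T + BB T = (dl * aP + bP) * aP ^ (k - 1) * aQ ^ m + (aP + dl * bP) * B"
    using key[OF k, of m] unfolding T_def by blast
  define u where "u = yy^2 * (1 - (xx^2)^2)"
  define v where "v = yy^6 * ph"
  have lu: "laurent_poly u" "laurent_poly v"
    unfolding u_def v_def ph_def by (intro lp_mult lp_power lp_add lp_diff lp_1 lp_X lp_Xinv)+
  obtain q where q: "laurent_poly q" "(u + v) ^ (k - 1) = u ^ (k - 1) + v * q"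
    using binom_split[OF lu] by blast
  define s where "s = (-1 :: int fls) ^ m"
  define c1 where "c1 = (1 :: int fls) + (xx^2)^2"
  define T1 where "T1 = (1 + (xx^2)^2) * (1 - (xx^2)^2) ^ (k - 1) * (1 - xx^2) ^ m"
  define J where "J = 7 + 2 * (k - 1) + 3 * m"
  define W where "W = yy^6 * (B - s * yy^7 * yy^(3 * m) * c1 * q * (1 - xx^2)^m)"
  have aQm: "aQ ^ m = s * yy^(3 * m) * (1 - xx^2)^m"
    unfolding ids(4) s_def power_minus[of "yy^3 * (1 - xx^2)"] power_mult_distrib power_mult by (simp only: mult.assoc)
  have uk: "u ^ (k - 1) = yy^(2 * (k - 1)) * (1 - (xx^2)^2) ^ (k - 1)"
    unfolding u_def power_mult_distrib power_mult by (simp only: mult.assoc)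
  have yJ: "yy ^ J = yy^7 * yy^(2 * (k - 1)) * yy^(3 * m)"
    unfolding J_def power_add by simp
  have Nform: "dl * AA T + BB T = - (s * yy^J * T1) + W * ph"
  proof -
    have "dl * AA T + BB T = - (yy^7 * c1) * (u ^ (k - 1) + v * q) * (s * yy^(3 * m) * (1 - xx^2)^m) + v * B"
      unfolding NB ids(1) ids(2)[folded v_def] unfolding ids(3)[folded u_def v_def] q(2) aQm c1_def by simp
    also have "\<dots> = - (s * yy^J * T1) + W * ph"
      unfolding uk yJ T1_def W_def v_def c1_def by algebra
    finally show ?thesis .
  qed
  define \<epsilon> where "\<epsilon> = - (\<epsilon>0 * s)"
  define i where "i = c - int J"
  have eps: "\<epsilon> \<in> {1, -1}" using e0 minus_one_pow[of m] unfolding \<epsilon>_def s_def by auto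
  have Xi: "fls_X_intpow i = fls_X_intpow c * yy ^ J"
    unfolding i_def fls_X_intpow_diff_conv_times Xpow_nat_neg ..
  have T1t: "(1 + tvar ^ 2) * (1 - tvar ^ 2) ^ (k - 1) * (1 - tvar) ^ m = T1"
    unfolding T1_def tvar_def ..
  have "jones (montesinos_2_5_1_2 k m) ori - \<epsilon> * fls_X_intpow i * T1 = (\<epsilon>0 * fls_X_intpow c * W) * phi10"
    unfolding montesinos_2_5_1_2_def T_def[symmetric] J0 Nform Xi \<epsilon>_def ph_phi10
    by algebra
  moreover have "laurent_poly (\<epsilon>0 * fls_X_intpow c * W)"
    unfolding W_def c1_def s_def
    by (intro lp_mult lp_pm1[OF e0] lp_shift1 lp_power lp_diff lp_add lp_1 lp_X lp_Xinv lp_uminus B q(1))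
  ultimately show ?thesis using eps T1t by metis
qed


lemma tvar4: "fls_X_intpow 8 = (tvar ^ 4 :: int fls)"
proof -
  have "tvar ^ 4 = (fls_X :: int fls) ^ 8" unfolding tvar_def power_mult[symmetric] by simp
  also have "\<dots> = fls_X_intpow 8" by (simp add: fls_X_power_conv_shift_1)
  finally show ?thesis by simp
qed

theorem theorem5p7:
  fixes k m :: nat and ori :: "slot \<Rightarrow> bool"
  assumes "k \<ge> 1"
    and "is_orientation (montesinos_2_5_1_2 k m) ori"
  shows "doteq (jones (montesinos_2_5_1_2 k m) ori)
               ((1 + tvar ^ 2) * (1 - tvar ^ 2) ^ (k - 1) * (1 - tvar) ^ m)
       \<and> (k + m \<ge> 2 \<longrightarrow>
          doteq (jones (montesinos_2_5_1_2 k m) ori)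
                ((1 + tvar) ^ (k - 1) * (1 - tvar) ^ (k + m - 2)))"
proof -
  obtain \<epsilon> i h where e: "\<epsilon> \<in> {1, -1}" and lh: "laurent_poly h" and
    eq: "jones (montesinos_2_5_1_2 k m) ori - \<epsilon> * fls_X_intpow i *
      ((1 + tvar ^ 2) * (1 - tvar ^ 2) ^ (k - 1) * (1 - tvar) ^ m) = h * phi10"
    using main_i[OF assms(1), of m ori] by blast
  have part1: "doteq (jones (montesinos_2_5_1_2 k m) ori)
               ((1 + tvar ^ 2) * (1 - tvar ^ 2) ^ (k - 1) * (1 - tvar) ^ m)"
    unfolding doteq_def in_It_def using e lh eq by blast
  have part2: "doteq (jones (montesinos_2_5_1_2 k m) ori)
                ((1 + tvar) ^ (k - 1) * (1 - tvar) ^ (k + m - 2))" if km: "k + m \<ge> 2"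
  proof -
    define T2 where "T2 = (1 + tvar) ^ (k - 1) * (1 - tvar) ^ (k + m - 2)"
    have i5: "(1 + tvar ^ 2) * (1 - tvar) = phi10 - tvar ^ 4"
      using id5 unfolding tvar_def ph_phi10 by (simp add: power_mult[symmetric])
    have sq: "(1 - tvar ^ 2) ^ (k - 1) = (1 - tvar) ^ (k - 1) * (1 + tvar) ^ (k - 1)"
      unfolding power_mult_distrib[symmetric] by (simp add: algebra_simps power2_eq_square)
    have ex: "k - 1 + m = Suc (k + m - 2)" using km assms(1) by simp
    have pw: "(1 - tvar) ^ (k - 1) * (1 - tvar) ^ m = (1 - tvar) * (1 - tvar) ^ (k + m - 2)"
      unfolding power_add[symmetric] ex by simp
    have T1: "(1 + tvar ^ 2) * (1 - tvar ^ 2) ^ (k - 1) * (1 - tvar) ^ m = (phi10 - tvar ^ 4) * T2"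
    proof -
      have "(1 + tvar ^ 2) * (1 - tvar ^ 2) ^ (k - 1) * (1 - tvar) ^ m
          = (1 + tvar ^ 2) * (1 + tvar) ^ (k - 1) * ((1 - tvar) ^ (k - 1) * (1 - tvar) ^ m)"
        unfolding sq by (simp only: mult_ac)
      also have "\<dots> = ((1 + tvar ^ 2) * (1 - tvar)) * T2"
        unfolding pw T2_def by (simp only: mult_ac)
      finally show ?thesis unfolding i5 .
    qed
    have X8: "fls_X_intpow (i + 8) = fls_X_intpow i * (tvar ^ 4 :: int fls)"
      unfolding tvar4[symmetric] fls_X_intpow_times_fls_X_intpow ..
    have "jones (montesinos_2_5_1_2 k m) ori - (- \<epsilon>) * fls_X_intpow (i + 8) * T2
        = (h + \<epsilon> * fls_X_intpow i * T2) * phi10"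
      using eq unfolding T1 X8 by algebra
    moreover have "laurent_poly (h + \<epsilon> * fls_X_intpow i * T2)"
      unfolding T2_def tvar_def
      by (intro lp_add lh lp_mult lp_pm1[OF e] lp_shift1 lp_power lp_diff lp_1 lp_X)
    moreover have "- \<epsilon> \<in> {1, -1}" using e by auto
    ultimately show ?thesis unfolding doteq_def in_It_def T2_def by blast
  qed
  show ?thesis using part1 part2 by blast
qed


end
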